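(* $\mathbf{LMO}(\Sigma)\subseteq V_\Sigma(\overline{\mathbf{J}})$.
   Context: A MON-1qfa over a finite alphabet $\Sigma$ is a tuple $A=\langle\Sigma\cup\{\#\},(O_c)_{c\in\Sigma\cup\{\#\}},\pi_0,F\rangle$, where $\pi_0\in\mathbb{C}^{1\times m}$ has norm $1$, each $O_c$ is an observable (Hermitian $m\times m$ matrix) with spectral decomposition $O_c=\sum_{r\in V(O_c)} r\,P_c(r)$ into orthogonal projectors, and $F\subseteq V(O_\#)$. For $x=x_1\cdots x_n$, with $\rho_0=\pi_0^\dagger\pi_0$ and $\rho_i=\sum_{r}P_{x_i}(r)\rho_{i-1}P_{x_i}(r)$, the acceptance probability is $p_A(x)=\sum_{r\in F}\mathrm{tr}(P_\#(r)\rho_n)$. $A$ recognizes $L$ with isolated cut-point $\lambda$ if for all $x\in\Sigma^*$, $x\in L\Leftrightarrow p_A(x)>\lambda$, and there is $\delta>0$ with $|p_A(x)-\lambda|\ge\delta$ for all $x$. $\mathbf{LMO}(\Sigma)$ is the class of languages over $\Sigma$ recognized by some MON-1qfa with isolated cut-point. For a regular language $L$, $M(L)$ is its syntactic monoid and $\phi_L:\Sigma^*\to M(L)$ the syntactic morphism. $\overline{\mathbf{J}}$ is the literal pseudovariety of $J$-trivial syntactic monoids $M(L)$ (i.e. $MxM=MyM\Rightarrow x=y$) whose syntactic morphism satisfies $\phi_L(\sigma)\phi_L(\sigma)=\phi_L(\sigma)$ for all $\sigma\in\Sigma$; $V_\Sigma(\overline{\mathbf{J}})$ is the class of regular languages $L\subseteq\Sigma^*$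 such that $M(L)$ is $J$-trivial and $\phi_L(\sigma)^2=\phi_L(\sigma)$ for every $\sigma\in\Sigma$. *)

theory Defs
  imports Complex_Main "Jordan_Normal_Form.Matrix"
begin

definition ctrans :: "complex mat \<Rightarrow> complex mat" where
  "ctrans A = mat (dim_col A) (dim_row A) (\<lambda>(i,j). cnj (A $$ (j,i)))"

definition mtrace :: "complex mat \<Rightarrow> complex" where
  "mtrace A = (\<Sum>i<dim_row A. A $$ (i,i))"

definition msum :: "nat \<Rightarrow> real set \<Rightarrow> (real \<Rightarrow> complex mat) \<Rightarrow> complex mat" where
  "msum m V f = mat m m (\<lambda>(i,j). \<Sum>r\<in>V. f r $$ (i,j))"

definition hermitian :: "nat \<Rightarrow> complex mat \<Rightarrow> bool" where
  "hermitian m B \<longleftrightarrow> B \<in> carrier_mat m m \<and> ctrans B = B"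

definition orth_projector :: "nat \<Rightarrow> complex mat \<Rightarrow> bool" where
  "orth_projector m P \<longleftrightarrow> P \<in> carrier_mat m m \<and> ctrans P = P \<and> P * P = P"

definition spectral_decomp ::
  "nat \<Rightarrow> complex mat \<Rightarrow> real set \<Rightarrow> (real \<Rightarrow> complex mat) \<Rightarrow> bool" where
  "spectral_decomp m B V P \<longleftrightarrow>
     hermitian m B \<and> finite V \<and>
     (\<forall>r\<in>V. orth_projector m (P r) \<and> P r \<noteq> 0\<^sub>m m m) \<and>
     (\<forall>r\<in>V. \<forall>s\<in>V. r \<noteq> s \<longrightarrow> P r * P s = 0\<^sub>m m m) \<and>
     msum m V P = 1\<^sub>m m \<and>
     B = msum m V (\<lambda>r. complex_of_real r \<cdot>\<^sub>m P r)"

text \<open>A MON-1qfa over the alphabet \<Sigma> (symbols of type 'a); the end-marker # is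
  represented by None, the symbol c \<in> \<Sigma> by Some c.\<close>
record 'a mon1qfa =
  dim  :: nat
  obs  :: "'a option \<Rightarrow> complex mat"
  spec :: "'a option \<Rightarrow> real set"
  proj :: "'a option \<Rightarrow> real \<Rightarrow> complex mat"
  init :: "complex mat"      \<comment> \<open>row vector pi_0, a 1 x m matrix\<close>
  acc  :: "real set"

definition valid_mon1qfa :: "'a set \<Rightarrow> 'a mon1qfa \<Rightarrow> bool" where
  "valid_mon1qfa \<Sigma> A \<longleftrightarrow>
     init A \<in> carrier_mat 1 (dim A) \<and>
     (\<Sum>j<dim A. (cmod (init A $$ (0,j)))\<^sup>2) = 1 \<and>
     (\<forall>c \<in> Some ` \<Sigma> \<union> {None}. spectral_decomp (dim A) (obs A c) (spec A c) (proj A c)) \<and>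
     acc A \<subseteq> spec A None"

definition measure_step :: "'a mon1qfa \<Rightarrow> 'a option \<Rightarrow> complex mat \<Rightarrow> complex mat" where
  "measure_step A c \<rho> = msum (dim A) (spec A c) (\<lambda>r. proj A c r * \<rho> * proj A c r)"

definition rho0 :: "'a mon1qfa \<Rightarrow> complex mat" where
  "rho0 A = ctrans (init A) * init A"

definition rho :: "'a mon1qfa \<Rightarrow> 'a list \<Rightarrow> complex mat" where
  "rho A x = foldl (\<lambda>\<rho> c. measure_step A (Some c) \<rho>) (rho0 A) x"

definition acc_prob :: "'a mon1qfa \<Rightarrow> 'a list \<Rightarrow> real" where
  "acc_prob A x = (\<Sum>r\<in>acc A. Re (mtrace (proj A None r * rho A x)))"

definition recognizes_isolated ::
  "'a set \<Rightarrow> 'a mon1qfa \<Rightarrow> real \<Rightarrow> 'a list set \<Rightarrow> bool" where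
  "recognizes_isolated \<Sigma> A cp L \<longleftrightarrow>
     (\<forall>x\<in>lists \<Sigma>. x \<in> L \<longleftrightarrow> acc_prob A x > cp) \<and>
     (\<exists>\<delta>>0. \<forall>x\<in>lists \<Sigma>. \<bar>acc_prob A x - cp\<bar> \<ge> \<delta>)"

definition LMO :: "'a set \<Rightarrow> 'a list set set" where
  "LMO \<Sigma> = {L. L \<subseteq> lists \<Sigma> \<and>
     (\<exists>A cp. valid_mon1qfa \<Sigma> A \<and> recognizes_isolated \<Sigma> A cp L)}"

definition regular_lang :: "'a set \<Rightarrow> 'a list set \<Rightarrow> bool" where
  "regular_lang \<Sigma> L \<longleftrightarrow>
     (\<exists>(Q :: nat set) q0 (\<delta> :: nat \<Rightarrow> 'a \<Rightarrow> nat) Fin.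
        finite Q \<and> q0 \<in> Q \<and> (\<forall>q\<in>Q. \<forall>a\<in>\<Sigma>. \<delta> q a \<in> Q) \<and> Fin \<subseteq> Q \<and>
        L = {w \<in> lists \<Sigma>. foldl \<delta> q0 w \<in> Fin})"

definition syn_cong :: "'a set \<Rightarrow> 'a list set \<Rightarrow> ('a list \<times> 'a list) set" where
  "syn_cong \<Sigma> L = {(x,y). x \<in> lists \<Sigma> \<and> y \<in> lists \<Sigma> \<and>
      (\<forall>u\<in>lists \<Sigma>. \<forall>v\<in>lists \<Sigma>. u @ x @ v \<in> L \<longleftrightarrow> u @ y @ v \<in> L)}"

text \<open>Syntactic morphism \<phi>_L : \<Sigma>* \<rightarrow> M(L) = \<Sigma>* / syn_cong (word \<mapsto> its class);
  the product of classes is [x][y] = [xy].\<close>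
definition syn_phi :: "'a set \<Rightarrow> 'a list set \<Rightarrow> 'a list \<Rightarrow> 'a list set" where
  "syn_phi \<Sigma> L x = syn_cong \<Sigma> L `` {x}"

definition syn_monoid :: "'a set \<Rightarrow> 'a list set \<Rightarrow> 'a list set set" where
  "syn_monoid \<Sigma> L = lists \<Sigma> // syn_cong \<Sigma> L"

text \<open>The two-sided ideal M \<phi>(x) M = {\<phi>(u)\<phi>(x)\<phi>(v)} = {\<phi>(uxv)}.\<close>
definition syn_ideal :: "'a set \<Rightarrow> 'a list set \<Rightarrow> 'a list \<Rightarrow> 'a list set set" where
  "syn_ideal \<Sigma> L x = {syn_phi \<Sigma> L (u @ x @ v) | u v. u \<in> lists \<Sigma> \<and> v \<in> lists \<Sigma>}"

definition J_trivial_syn :: "'a set \<Rightarrow> 'a list set \<Rightarrow> bool" where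
  "J_trivial_syn \<Sigma> L \<longleftrightarrow>
     (\<forall>x\<in>lists \<Sigma>. \<forall>y\<in>lists \<Sigma>. syn_ideal \<Sigma> L x = syn_ideal \<Sigma> L y \<longrightarrow>
        syn_phi \<Sigma> L x = syn_phi \<Sigma> L y)"

definition V_Jbar :: "'a set \<Rightarrow> 'a list set set" where
  "V_Jbar \<Sigma> = {L. L \<subseteq> lists \<Sigma> \<and> regular_lang \<Sigma> L \<and> J_trivial_syn \<Sigma> L \<and>
      (\<forall>\<sigma>\<in>\<Sigma>. syn_phi \<Sigma> L [\<sigma>, \<sigma>] = syn_phi \<Sigma> L [\<sigma>])}"

end

theory Submission
  imports Defs "HOL-Analysis.L2_Norm"
begin

lemma mult_entry:
  assumes "A \<in> carrier_mat m n" "B \<in> carrier_mat n k" "i < m" "j < k"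
  shows "(A * B) $$ (i,j) = (\<Sum>l<n. A $$ (i,l) * B $$ (l,j))"
  using assms by (auto simp: scalar_prod_def lessThan_atLeast0 intro!: sum.cong)

definition IX :: "nat \<Rightarrow> (nat \<times> nat) set" where
  "IX m = {..<m} \<times> {..<m}"

lemma finite_IX[simp]: "finite (IX m)" by (simp add: IX_def)

definition hs :: "nat \<Rightarrow> complex mat \<Rightarrow> complex mat \<Rightarrow> complex" where
  "hs m A B = (\<Sum>p\<in>IX m. cnj (A $$ p) * B $$ p)"

definition nrm :: "nat \<Rightarrow> complex mat \<Rightarrow> real" where
  "nrm m A = L2_set (\<lambda>p. cmod (A $$ p)) (IX m)"

lemma nrm_nonneg[simp]: "0 \<le> nrm m A" by (simp add: nrm_def)

lemma nrm_sq: "(nrm m A)\<^sup>2 = (\<Sum>p\<in>IX m. (cmod (A $$ p))\<^sup>2)"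
  unfolding nrm_def L2_set_def by (simp add: sum_nonneg)

lemma cs: "cmod (hs m A B) \<le> nrm m A * nrm m B"
proof -
  have "cmod (hs m A B) \<le> (\<Sum>p\<in>IX m. cmod (cnj (A $$ p) * B $$ p))"
    unfolding hs_def by (rule norm_sum)
  also have "\<dots> = (\<Sum>p\<in>IX m. \<bar>cmod (A $$ p)\<bar> * \<bar>cmod (B $$ p)\<bar>)"
    by (simp add: norm_mult)
  also have "\<dots> \<le> nrm m A * nrm m B" unfolding nrm_def by (rule L2_set_mult_ineq)
  finally show ?thesis .
qed

lemma cs_re: "\<bar>Re (hs m A B)\<bar> \<le> nrm m A * nrm m B"
  using cs[of m A B] abs_Re_le_cmod order_trans by blast

lemma IX_mem: "p \<in> IX m \<Longrightarrow> fst p < m \<and> snd p < m"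
  by (auto simp: IX_def)

lemma hs_minus_right:
  assumes "B \<in> carrier_mat m m" "C \<in> carrier_mat m m"
  shows "hs m A (B - C) = hs m A B - hs m A C"
  unfolding hs_def sum_subtractf[symmetric]
  by (rule sum.cong, insert assms, auto simp: IX_def algebra_simps)

lemma hs_minus_left:
  assumes "B \<in> carrier_mat m m" "C \<in> carrier_mat m m"
  shows "hs m (B - C) A = hs m B A - hs m C A"
  unfolding hs_def sum_subtractf[symmetric]
  by (rule sum.cong, insert assms, auto simp: IX_def algebra_simps)

lemma hs_swap: "hs m B A = cnj (hs m A B)"
  unfolding hs_def by (simp add: mult.commute)

lemma nrm_triangle:
  assumes "A \<in> carrier_mat m m" "B \<in> carrier_mat m m" "C \<in> carrier_mat m m"
  shows "nrm m (A - C) \<le> nrm m (A - B) + nrm m (B - C)"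
proof -
  have "nrm m (A - C) \<le> L2_set (\<lambda>p. cmod ((A - B) $$ p) + cmod ((B - C) $$ p)) (IX m)"
    unfolding nrm_def
  proof (rule L2_set_mono)
    fix p assume "p \<in> IX m"
    then obtain i j where p: "p = (i,j)" "i < m" "j < m" by (auto simp: IX_def)
    have "(A - C) $$ p = (A - B) $$ p + (B - C) $$ p" using assms p by auto
    then show "cmod ((A - C) $$ p) \<le> cmod ((A - B) $$ p) + cmod ((B - C) $$ p)"
      by (metis norm_triangle_ineq)
  qed simp
  also have "\<dots> \<le> nrm m (A - B) + nrm m (B - C)"
    unfolding nrm_def by (rule L2_set_triangle_ineq)
  finally show ?thesis .
qed

lemma nrm_minus_commute:
  assumes "A \<in> carrier_mat m m" "B \<in> carrier_mat m m"
  shows "nrm m (A - B) = nrm m (B - A)"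
  unfolding nrm_def
  by (rule L2_set_cong, insert assms, auto simp: IX_def norm_minus_commute)

lemma re_hs_self: "Re (hs m A A) = (nrm m A)\<^sup>2"
  unfolding nrm_sq hs_def
  by (simp add: complex_norm_square[symmetric] mult.commute)

lemma pyth:
  assumes "B \<in> carrier_mat m m" "C \<in> carrier_mat m m" "Re (hs m C (B - C)) = 0"
  shows "(nrm m B)\<^sup>2 = (nrm m C)\<^sup>2 + (nrm m (B - C))\<^sup>2"
proof -
  have "(nrm m B)\<^sup>2 = (\<Sum>p\<in>IX m. (cmod (C $$ p))\<^sup>2 + (cmod ((B - C) $$ p))\<^sup>2
        + 2 * Re (cnj (C $$ p) * (B - C) $$ p))"
    unfolding nrm_sq
  proof (rule sum.cong)
    fix p assume "p \<in> IX m"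
    then obtain i j where p: "p = (i,j)" "i < m" "j < m" by (auto simp: IX_def)
    define c where "c = C $$ p"
    define d where "d = (B - C) $$ p"
    have "B $$ p = c + d" using assms p unfolding c_def d_def by auto
    then show "(cmod (B $$ p))\<^sup>2 = (cmod (C $$ p))\<^sup>2 + (cmod ((B - C) $$ p))\<^sup>2
        + 2 * Re (cnj (C $$ p) * (B - C) $$ p)"
      unfolding c_def[symmetric] d_def[symmetric]
      by (simp only: cmod_power2) (simp add: power2_eq_square algebra_simps)
  qed simp
  also have "\<dots> = (nrm m C)\<^sup>2 + (nrm m (B - C))\<^sup>2 + 2 * Re (hs m C (B - C))"
    unfolding nrm_sq hs_def by (simp add: sum.distrib sum_distrib_left)
  finally show ?thesis using assms by simp
qed


lemma ctrans_carrier[simp]: "A \<in> carrier_mat m n \<Longrightarrow> ctrans A \<in> carrier_mat n m"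
  by (simp add: ctrans_def)

lemma ctrans_entry: "A \<in> carrier_mat m n \<Longrightarrow> i < n \<Longrightarrow> j < m \<Longrightarrow> ctrans A $$ (i,j) = cnj (A $$ (j,i))"
  by (simp add: ctrans_def)

lemma msum_carrier[simp]: "msum m V f \<in> carrier_mat m m"
  by (simp add: msum_def)

lemma msum_entry: "i < m \<Longrightarrow> j < m \<Longrightarrow> msum m V f $$ (i,j) = (\<Sum>r\<in>V. f r $$ (i,j))"
  by (simp add: msum_def)

lemma sum_IX: "(\<Sum>p\<in>IX m. f p) = (\<Sum>i<m. \<Sum>j<m. f (i,j))"
  unfolding IX_def by (simp add: sum.cartesian_product)

lemma hs_mult_left:
  assumes X: "X \<in> carrier_mat m m" and Y: "Y \<in> carrier_mat m m" and Z: "Z \<in> carrier_mat m m"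
  shows "hs m (X * Y) Z = hs m Y (ctrans X * Z)"
proof -
  have "hs m (X * Y) Z = (\<Sum>i<m. \<Sum>j<m. \<Sum>k<m. cnj (X$$(i,k)) * cnj (Y$$(k,j)) * Z$$(i,j))"
    unfolding hs_def sum_IX using X Y
    by (intro sum.cong refl) (simp add: mult_entry[OF X Y] sum_distrib_right cnj_sum del: index_mult_mat)
  also have "\<dots> = (\<Sum>i<m. \<Sum>k<m. \<Sum>j<m. cnj (X$$(i,k)) * cnj (Y$$(k,j)) * Z$$(i,j))"
    by (rule sum.cong[OF refl], rule sum.swap)
  also have "\<dots> = (\<Sum>k<m. \<Sum>i<m. \<Sum>j<m. cnj (X$$(i,k)) * cnj (Y$$(k,j)) * Z$$(i,j))"
    by (rule sum.swap)
  also have "\<dots> = (\<Sum>k<m. \<Sum>j<m. \<Sum>i<m. cnj (X$$(i,k)) * cnj (Y$$(k,j)) * Z$$(i,j))"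
    by (rule sum.cong[OF refl], rule sum.swap)
  also have "\<dots> = hs m Y (ctrans X * Z)"
    unfolding hs_def sum_IX
    by (intro sum.cong refl) (simp add: mult_entry[OF ctrans_carrier[OF X] Z] ctrans_entry[OF X] sum_distrib_left mult_ac del: index_mult_mat)
  finally show ?thesis .
qed

lemma hs_mult_right:
  assumes X: "X \<in> carrier_mat m m" and Y: "Y \<in> carrier_mat m m" and Z: "Z \<in> carrier_mat m m"
  shows "hs m (Y * X) Z = hs m Y (Z * ctrans X)"
proof -
  have "hs m (Y * X) Z = (\<Sum>i<m. \<Sum>j<m. \<Sum>k<m. cnj (Y$$(i,k)) * cnj (X$$(k,j)) * Z$$(i,j))"
    unfolding hs_def sum_IX using X Y
    by (intro sum.cong refl) (simp add: mult_entry[OF Y X] sum_distrib_right cnj_sum del: index_mult_mat)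
  also have "\<dots> = (\<Sum>i<m. \<Sum>k<m. \<Sum>j<m. cnj (Y$$(i,k)) * cnj (X$$(k,j)) * Z$$(i,j))"
    by (rule sum.cong[OF refl], rule sum.swap)
  also have "\<dots> = hs m Y (Z * ctrans X)"
    unfolding hs_def sum_IX
    by (intro sum.cong refl) (simp add: mult_entry[OF Z ctrans_carrier[OF X]] ctrans_entry[OF X] sum_distrib_left mult_ac del: index_mult_mat)
  finally show ?thesis .
qed

lemma hs_msum_left: "hs m (msum m V f) B = (\<Sum>r\<in>V. hs m (f r) B)"
proof -
  have "hs m (msum m V f) B = (\<Sum>p\<in>IX m. \<Sum>r\<in>V. cnj (f r $$ p) * B $$ p)"
    unfolding hs_def by (intro sum.cong refl) (auto simp: msum_entry cnj_sum sum_distrib_right IX_def)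
  also have "\<dots> = (\<Sum>r\<in>V. hs m (f r) B)" unfolding hs_def by (rule sum.swap)
  finally show ?thesis .
qed

lemma hs_msum_right: "hs m A (msum m V f) = (\<Sum>r\<in>V. hs m A (f r))"
proof -
  have "hs m A (msum m V f) = (\<Sum>p\<in>IX m. \<Sum>r\<in>V. cnj (A $$ p) * f r $$ p)"
    unfolding hs_def by (intro sum.cong refl) (auto simp: msum_entry sum_distrib_left IX_def)
  also have "\<dots> = (\<Sum>r\<in>V. hs m A (f r))" unfolding hs_def by (rule sum.swap)
  finally show ?thesis .
qed


definition pfam :: "nat \<Rightarrow> real set \<Rightarrow> (real \<Rightarrow> complex mat) \<Rightarrow> bool" where
  "pfam m V P \<longleftrightarrow> finite V \<and>
     (\<forall>r\<in>V. P r \<in> carrier_mat m m \<and> ctrans (P r) = P r \<and> P r * P r = P r) \<and>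
     (\<forall>r\<in>V. \<forall>s\<in>V. r \<noteq> s \<longrightarrow> P r * P s = 0\<^sub>m m m)"

definition meas :: "nat \<Rightarrow> real set \<Rightarrow> (real \<Rightarrow> complex mat) \<Rightarrow> complex mat \<Rightarrow> complex mat" where
  "meas m V P B = msum m V (\<lambda>r. P r * B * P r)"

lemma spectral_pfam: "spectral_decomp m B V P \<Longrightarrow> pfam m V P"
  unfolding spectral_decomp_def pfam_def orth_projector_def by blast

lemma meas_carrier[simp]: "meas m V P B \<in> carrier_mat m m"
  by (simp add: meas_def)

lemma msum_dims[simp]: "dim_row (msum m V f) = m" "dim_col (msum m V f) = m"
  by (simp_all add: msum_def)

lemma meas_dims[simp]: "dim_row (meas m V P B) = m" "dim_col (meas m V P B) = m"
  by (simp_all add: meas_def msum_def)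

lemma hs_sandwich:
  assumes P: "P \<in> carrier_mat m m" "ctrans P = P" and A: "A \<in> carrier_mat m m"
    and B: "B \<in> carrier_mat m m"
  shows "hs m (P * A * P) B = hs m A (P * B * P)"
proof -
  have PA: "P * A \<in> carrier_mat m m" using P A by simp
  have "hs m (P * A * P) B = hs m (P * A) (B * P)"
    using hs_mult_right[OF P(1) PA B] P by simp
  also have "\<dots> = hs m A (P * (B * P))"
    using hs_mult_left[OF P(1) A, of "B * P"] P B by simp
  also have "P * (B * P) = P * B * P" using P B by simp
  finally show ?thesis .
qed

lemma meas_selfadj:
  assumes "pfam m V P" "A \<in> carrier_mat m m" "B \<in> carrier_mat m m"
  shows "hs m (meas m V P A) B = hs m A (meas m V P B)"
  unfolding meas_def hs_msum_left hs_msum_right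
  by (rule sum.cong[OF refl], rule hs_sandwich, insert assms, auto simp: pfam_def)

lemma meas_minus:
  assumes "pfam m V P" "B \<in> carrier_mat m m" "C \<in> carrier_mat m m"
  shows "meas m V P (B - C) = meas m V P B - meas m V P C"
proof (rule eq_matI)
  fix i j assume ij: "i < dim_row (meas m V P B - meas m V P C)" "j < dim_col (meas m V P B - meas m V P C)"
  then have ij: "i < m" "j < m" by auto
  have "\<And>r. r \<in> V \<Longrightarrow> P r * (B - C) * P r = P r * B * P r - P r * C * P r"
  proof -
    fix r assume "r \<in> V"
    then have Pr: "P r \<in> carrier_mat m m" using assms(1) by (auto simp: pfam_def)
    have "P r * (B - C) = P r * B - P r * C" using Pr assms by (simp add: mult_minus_distrib_mat)
    then show "P r * (B - C) * P r = P r * B * P r - P r * C * P r"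
      using Pr assms by (simp add: minus_mult_distrib_mat[of _ m m])
  qed
  moreover have "\<And>r. r \<in> V \<Longrightarrow> (P r * B * P r - P r * C * P r) $$ (i,j) =
      (P r * B * P r) $$ (i,j) - (P r * C * P r) $$ (i,j)"
    using ij assms by (auto simp: pfam_def)
  ultimately show "meas m V P (B - C) $$ (i, j) = (meas m V P B - meas m V P C) $$ (i, j)"
    using ij by (simp add: meas_def msum_entry sum_subtractf)
qed auto

lemma mult_msum_left:
  assumes "X \<in> carrier_mat m m" "\<And>r. r \<in> V \<Longrightarrow> f r \<in> carrier_mat m m"
  shows "X * msum m V f = msum m V (\<lambda>r. X * f r)"
proof (rule eq_matI)
  fix i j assume "i < dim_row (msum m V (\<lambda>r. X * f r))" "j < dim_col (msum m V (\<lambda>r. X * f r))"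
  then have ij: "i < m" "j < m" by (auto simp: msum_def)
  have "(X * msum m V f) $$ (i,j) = (\<Sum>l<m. X $$ (i,l) * (\<Sum>r\<in>V. f r $$ (l,j)))"
    using ij assms by (simp add: mult_entry[OF assms(1) msum_carrier] msum_entry del: index_mult_mat)
  also have "\<dots> = (\<Sum>l<m. \<Sum>r\<in>V. X $$ (i,l) * f r $$ (l,j))" by (simp add: sum_distrib_left)
  also have "\<dots> = (\<Sum>r\<in>V. \<Sum>l<m. X $$ (i,l) * f r $$ (l,j))" by (rule sum.swap)
  also have "\<dots> = (\<Sum>r\<in>V. (X * f r) $$ (i,j))"
    by (rule sum.cong[OF refl], subst mult_entry[OF assms(1) assms(2)], insert ij, auto)
  also have "\<dots> = msum m V (\<lambda>r. X * f r) $$ (i,j)" using ij by (simp add: msum_entry)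
  finally show "(X * msum m V f) $$ (i,j) = msum m V (\<lambda>r. X * f r) $$ (i,j)" .
qed (insert assms, auto simp: msum_def)

lemma mult_msum_right:
  assumes "X \<in> carrier_mat m m" "\<And>r. r \<in> V \<Longrightarrow> f r \<in> carrier_mat m m"
  shows "msum m V f * X = msum m V (\<lambda>r. f r * X)"
proof (rule eq_matI)
  fix i j assume "i < dim_row (msum m V (\<lambda>r. f r * X))" "j < dim_col (msum m V (\<lambda>r. f r * X))"
  then have ij: "i < m" "j < m" by (auto simp: msum_def)
  have "(msum m V f * X) $$ (i,j) = (\<Sum>l<m. (\<Sum>r\<in>V. f r $$ (i,l)) * X $$ (l,j))"
    using ij assms by (simp add: mult_entry[OF msum_carrier assms(1)] msum_entry del: index_mult_mat)
  also have "\<dots> = (\<Sum>l<m. \<Sum>r\<in>V. f r $$ (i,l) * X $$ (l,j))" by (simp add: sum_distrib_right)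
  also have "\<dots> = (\<Sum>r\<in>V. \<Sum>l<m. f r $$ (i,l) * X $$ (l,j))" by (rule sum.swap)
  also have "\<dots> = (\<Sum>r\<in>V. (f r * X) $$ (i,j))"
    by (rule sum.cong[OF refl], subst mult_entry[OF assms(2) assms(1)], insert ij, auto)
  also have "\<dots> = msum m V (\<lambda>r. f r * X) $$ (i,j)" using ij by (simp add: msum_entry)
  finally show "(msum m V f * X) $$ (i,j) = msum m V (\<lambda>r. f r * X) $$ (i,j)" .
qed (insert assms, auto simp: msum_def)

lemma meas_idem:
  assumes pf: "pfam m V P" and B: "B \<in> carrier_mat m m"
  shows "meas m V P (meas m V P B) = meas m V P B"
proof -
  have Pc: "\<And>r. r \<in> V \<Longrightarrow> P r \<in> carrier_mat m m" using pf by (auto simp: pfam_def)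
  have Pi: "\<And>r. r \<in> V \<Longrightarrow> P r * P r = P r" using pf by (auto simp: pfam_def)
  have Po: "\<And>r s. r \<in> V \<Longrightarrow> s \<in> V \<Longrightarrow> r \<noteq> s \<Longrightarrow> P r * P s = 0\<^sub>m m m"
    using pf by (auto simp: pfam_def)
  have fc: "\<And>s. s \<in> V \<Longrightarrow> P s * B * P s \<in> carrier_mat m m" using Pc B by (meson mult_carrier_mat)
  have trm: "P r * (P s * B * P s) * P r = (if r = s then P r * B * P r else 0\<^sub>m m m)"
    if r: "r \<in> V" and s: "s \<in> V" for r s
  proof -
    have "P r * (P s * B * P s) * P r = (P r * P s) * B * (P s * P r)"
      using Pc[OF r] Pc[OF s] B by (simp add: assoc_mult_mat[of _ m m _ m _ m])
    then show ?thesis using Pi Po r s Pc[OF r] B by auto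
  qed
  have inner: "P r * meas m V P B * P r = msum m V (\<lambda>s. P r * (P s * B * P s) * P r)"
    if r: "r \<in> V" for r
    unfolding meas_def
    using mult_msum_left[OF Pc[OF r] fc] mult_msum_right[OF Pc[OF r], of V "\<lambda>s. P r * (P s * B * P s)"]
      Pc[OF r] fc by auto
  show ?thesis
  proof (rule eq_matI)
    fix i j assume "i < dim_row (meas m V P B)" "j < dim_col (meas m V P B)"
    then have ij: "i < m" "j < m" by auto
    have "meas m V P (meas m V P B) $$ (i,j) =
          (\<Sum>r\<in>V. \<Sum>s\<in>V. (if r = s then P r * B * P r else 0\<^sub>m m m) $$ (i,j))"
      unfolding meas_def[of m V P "meas m V P B"] using ij
      by (simp add: msum_entry inner trm cong: sum.cong)
    also have "\<dots> = (\<Sum>r\<in>V. (P r * B * P r) $$ (i,j))"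
    proof (rule sum.cong[OF refl])
      fix r assume r: "r \<in> V"
      have "(\<Sum>s\<in>V. (if r = s then P r * B * P r else 0\<^sub>m m m) $$ (i,j)) =
            (\<Sum>s\<in>V. if r = s then (P r * B * P r) $$ (i,j) else 0)"
        by (rule sum.cong[OF refl]) (use ij in auto)
      also have "\<dots> = (P r * B * P r) $$ (i,j)" using r pf by (simp add: pfam_def)
      finally show "(\<Sum>s\<in>V. (if r = s then P r * B * P r else 0\<^sub>m m m) $$ (i,j)) = (P r * B * P r) $$ (i,j)" .
    qed
    also have "\<dots> = meas m V P B $$ (i,j)" using ij by (simp add: meas_def msum_entry)
    finally show "meas m V P (meas m V P B) $$ (i,j) = meas m V P B $$ (i,j)" .
  qed auto
qed


lemma meas_orth:
  assumes pf: "pfam m V P" and B: "B \<in> carrier_mat m m"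
  shows "hs m (meas m V P B) (B - meas m V P B) = 0"
proof -
  have "hs m (meas m V P B) (B - meas m V P B) = hs m B (meas m V P (B - meas m V P B))"
    by (rule meas_selfadj[OF pf B]) (use B in auto)
  also have "\<dots> = hs m B (meas m V P B - meas m V P (meas m V P B))"
    using meas_minus[OF pf B meas_carrier] by simp
  also have "\<dots> = 0" using meas_idem[OF pf B] hs_minus_right[OF meas_carrier meas_carrier] by simp
  finally show ?thesis .
qed

lemma meas_pyth:
  assumes pf: "pfam m V P" and B: "B \<in> carrier_mat m m"
  shows "(nrm m B)\<^sup>2 = (nrm m (meas m V P B))\<^sup>2 + (nrm m (meas m V P B - B))\<^sup>2"
  using pyth[OF B meas_carrier] meas_orth[OF pf B] nrm_minus_commute[OF B meas_carrier] by simp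

lemma meas_contr:
  assumes pf: "pfam m V P" and B: "B \<in> carrier_mat m m"
  shows "nrm m (meas m V P B) \<le> nrm m B"
proof -
  have "(nrm m (meas m V P B))\<^sup>2 \<le> (nrm m B)\<^sup>2" using meas_pyth[OF pf B] by simp
  then show ?thesis by (simp add: power2_le_iff_abs_le)
qed

lemma meas_nonexp:
  assumes pf: "pfam m V P" and B: "B \<in> carrier_mat m m" and C: "C \<in> carrier_mat m m"
  shows "nrm m (meas m V P B - meas m V P C) \<le> nrm m (B - C)"
  using meas_contr[OF pf minus_carrier_mat[OF C, of B]] meas_minus[OF pf B C] by simp

definition pw :: "'a list \<Rightarrow> nat \<Rightarrow> 'a list" where
  "pw s k = concat (replicate k s)"

lemma pw_Suc: "pw s (Suc k) = pw s k @ s"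
  unfolding pw_def by (simp add: replicate_append_same[symmetric])

lemma pw_Suc': "pw s (Suc k) = s @ pw s k"
  unfolding pw_def by simp

lemma pw_add: "pw s (a + b) = pw s a @ pw s b"
  unfolding pw_def by (simp add: replicate_add)

lemma pw_mult: "pw s (a * n) = pw (pw s n) a"
  by (induction a) (simp_all add: pw_def replicate_add)

lemma pw_0[simp]: "pw s 0 = []" by (simp add: pw_def)

lemma pw_lists: "s \<in> lists S \<Longrightarrow> pw s k \<in> lists S"
  by (induction k) (auto simp: pw_Suc)

lemma pw_rev: "rev (pw s k) = pw (rev s) k"
proof (induction k)
  case (Suc k)
  have "rev (pw s (Suc k)) = rev (pw s k) @ rev s" by (simp add: pw_Suc')
  also have "\<dots> = pw (rev s) (Suc k)" using Suc by (simp add: pw_Suc)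
  finally show ?case .
qed simp

lemma set_pw: "k \<ge> 1 \<Longrightarrow> set (pw s k) = set s"
  by (simp add: pw_def)


lemma mtrace_hs:
  assumes P: "P \<in> carrier_mat m m" "ctrans P = P" and R: "R \<in> carrier_mat m m"
  shows "mtrace (P * R) = hs m P R"
proof -
  have herm: "cnj (P $$ (a,b)) = P $$ (b,a)" if "a < m" "b < m" for a b
    using ctrans_entry[OF P(1), of b a] P(2) that by simp
  have dr: "dim_row (P * R) = m" using P by simp
  have "mtrace (P * R) = (\<Sum>i<m. \<Sum>k<m. P $$ (i,k) * R $$ (k,i))"
    unfolding mtrace_def dr using P R by (intro sum.cong) (auto simp: mult_entry[OF P(1) R] carrier_matD simp del: index_mult_mat)
  also have "\<dots> = (\<Sum>k<m. \<Sum>i<m. P $$ (i,k) * R $$ (k,i))" by (rule sum.swap)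
  also have "\<dots> = hs m P R"
    unfolding hs_def sum_IX by (intro sum.cong refl) (simp add: herm)
  finally show ?thesis .
qed

locale qfa =
  fixes Sig :: "'a set" and A :: "'a mon1qfa" and cp :: real and L :: "'a list set" and dl :: real
  assumes valid: "valid_mon1qfa Sig A"
    and LS: "L \<subseteq> lists Sig"
    and recog: "\<And>x. x \<in> lists Sig \<Longrightarrow> x \<in> L \<longleftrightarrow> acc_prob A x > cp"
    and dpos: "dl > 0"
    and iso: "\<And>x. x \<in> lists Sig \<Longrightarrow> dl \<le> \<bar>acc_prob A x - cp\<bar>"
begin

abbreviation "M \<equiv> dim A"

definition Ph :: "'a \<Rightarrow> complex mat \<Rightarrow> complex mat" where
  "Ph c B = measure_step A (Some c) B"

definition run :: "complex mat \<Rightarrow> 'a list \<Rightarrow> complex mat" where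
  "run \<sigma> w = foldl (\<lambda>\<rho> c. Ph c \<rho>) \<sigma> w"

definition Qm :: "complex mat" where
  "Qm = msum M (acc A) (proj A None)"

lemma pf: "c \<in> Sig \<Longrightarrow> pfam M (spec A (Some c)) (proj A (Some c))"
  using valid unfolding valid_mon1qfa_def by (auto intro: spectral_pfam)

lemma pfN: "pfam M (spec A None) (proj A None)"
  using valid unfolding valid_mon1qfa_def by (auto intro: spectral_pfam)

lemma Ph_meas: "Ph c B = meas M (spec A (Some c)) (proj A (Some c)) B"
  by (simp add: Ph_def measure_step_def meas_def)

lemma Ph_carrier[simp]: "Ph c B \<in> carrier_mat M M"
  by (simp add: Ph_meas)

lemma run_Nil[simp]: "run \<sigma> [] = \<sigma>" by (simp add: run_def)
lemma run_Cons[simp]: "run \<sigma> (c # w) = run (Ph c \<sigma>) w" by (simp add: run_def)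
lemma run_append: "run \<sigma> (u @ v) = run (run \<sigma> u) v" by (simp add: run_def)
lemma run_snoc: "run \<sigma> (u @ [c]) = Ph c (run \<sigma> u)" by (simp add: run_def)

lemma run_carrier: "\<sigma> \<in> carrier_mat M M \<Longrightarrow> run \<sigma> w \<in> carrier_mat M M"
  by (induction w arbitrary: \<sigma>) auto

lemma Ph_nonexp: "c \<in> Sig \<Longrightarrow> B \<in> carrier_mat M M \<Longrightarrow> C \<in> carrier_mat M M \<Longrightarrow>
    nrm M (Ph c B - Ph c C) \<le> nrm M (B - C)"
  unfolding Ph_meas by (rule meas_nonexp[OF pf])

lemma Ph_contr: "c \<in> Sig \<Longrightarrow> B \<in> carrier_mat M M \<Longrightarrow> nrm M (Ph c B) \<le> nrm M B"
  unfolding Ph_meas by (rule meas_contr[OF pf])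

lemma Ph_pyth: "c \<in> Sig \<Longrightarrow> B \<in> carrier_mat M M \<Longrightarrow>
   (nrm M B)\<^sup>2 = (nrm M (Ph c B))\<^sup>2 + (nrm M (Ph c B - B))\<^sup>2"
  unfolding Ph_meas by (rule meas_pyth[OF pf])

lemma Ph_idem: "c \<in> Sig \<Longrightarrow> B \<in> carrier_mat M M \<Longrightarrow> Ph c (Ph c B) = Ph c B"
  unfolding Ph_meas by (rule meas_idem[OF pf])

lemma Ph_selfadj: "c \<in> Sig \<Longrightarrow> B \<in> carrier_mat M M \<Longrightarrow> C \<in> carrier_mat M M \<Longrightarrow>
   hs M (Ph c B) C = hs M B (Ph c C)"
  unfolding Ph_meas by (rule meas_selfadj[OF pf])

lemma run_contr: "w \<in> lists Sig \<Longrightarrow> \<sigma> \<in> carrier_mat M M \<Longrightarrow> nrm M (run \<sigma> w) \<le> nrm M \<sigma>"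
proof (induction w arbitrary: \<sigma>)
  case (Cons c w)
  then have "nrm M (run (Ph c \<sigma>) w) \<le> nrm M (Ph c \<sigma>)" by auto
  also have "\<dots> \<le> nrm M \<sigma>" using Cons Ph_contr by auto
  finally show ?case by simp
qed simp

lemma run_nonexp: "w \<in> lists Sig \<Longrightarrow> \<sigma> \<in> carrier_mat M M \<Longrightarrow> \<tau> \<in> carrier_mat M M \<Longrightarrow>
   nrm M (run \<sigma> w - run \<tau> w) \<le> nrm M (\<sigma> - \<tau>)"
proof (induction w arbitrary: \<sigma> \<tau>)
  case (Cons c w)
  then have "nrm M (run (Ph c \<sigma>) w - run (Ph c \<tau>) w) \<le> nrm M (Ph c \<sigma> - Ph c \<tau>)" by auto
  also have "\<dots> \<le> nrm M (\<sigma> - \<tau>)" using Cons Ph_nonexp by auto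
  finally show ?case by simp
qed simp

lemma run_pair: "w \<in> lists Sig \<Longrightarrow> W \<in> carrier_mat M M \<Longrightarrow> \<sigma> \<in> carrier_mat M M \<Longrightarrow>
   hs M W (run \<sigma> w) = hs M (run W (rev w)) \<sigma>"
proof (induction w arbitrary: \<sigma>)
  case (Cons c w)
  have "hs M W (run \<sigma> (c # w)) = hs M (run W (rev w)) (Ph c \<sigma>)" using Cons by auto
  also have "\<dots> = hs M (Ph c (run W (rev w))) \<sigma>"
    using Ph_selfadj[of c "run W (rev w)" \<sigma>] Cons run_carrier by auto
  also have "\<dots> = hs M (run W (rev (c # w))) \<sigma>" by (simp add: run_snoc)
  finally show ?case .
qed simp

lemma rho0_carrier: "rho0 A \<in> carrier_mat M M"
proof -
  have "init A \<in> carrier_mat 1 M" using valid by (simp add: valid_mon1qfa_def)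
  then show ?thesis unfolding rho0_def by (meson ctrans_carrier mult_carrier_mat)
qed

lemma rho_run: "rho A x = run (rho0 A) x"
  by (simp add: rho_def run_def Ph_def)

lemma Qm_carrier: "Qm \<in> carrier_mat M M" by (simp add: Qm_def)

lemma acc_hs: "acc_prob A x = Re (hs M Qm (rho A x))"
proof -
  have accsub: "acc A \<subseteq> spec A None" using valid by (simp add: valid_mon1qfa_def)
  have rc: "rho A x \<in> carrier_mat M M" using rho_run run_carrier rho0_carrier by simp
  have "acc_prob A x = (\<Sum>r\<in>acc A. Re (hs M (proj A None r) (rho A x)))"
    unfolding acc_prob_def
  proof (rule sum.cong[OF refl])
    fix r assume "r \<in> acc A"
    then have "r \<in> spec A None" using accsub by auto
    then have "proj A None r \<in> carrier_mat M M" "ctrans (proj A None r) = proj A None r"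
      using pfN by (auto simp: pfam_def)
    then show "Re (mtrace (proj A None r * rho A x)) = Re (hs M (proj A None r) (rho A x))"
      using mtrace_hs rc by simp
  qed
  also have "\<dots> = Re (hs M Qm (rho A x))" unfolding Qm_def hs_msum_left by simp
  finally show ?thesis .
qed

lemma acc_run: "acc_prob A x = Re (hs M Qm (run (rho0 A) x))"
  using acc_hs rho_run by simp

end


lemma nrm_self: "B \<in> carrier_mat m m \<Longrightarrow> nrm m (B - B) = 0"
  unfolding nrm_def by (rule L2_set_0') (auto simp: IX_def)

context qfa
begin

lemma step_small:
  assumes w: "w \<in> lists Sig" and s: "\<sigma> \<in> carrier_mat M M" and dec: "w = w1 @ c # w2"
  shows "nrm M (Ph c (run \<sigma> w1) - run \<sigma> w1) \<le> sqrt ((nrm M \<sigma>)\<^sup>2 - (nrm M (run \<sigma> w))\<^sup>2)"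
proof -
  define \<tau> where "\<tau> = run \<sigma> w1"
  have c: "c \<in> Sig" and w1: "w1 \<in> lists Sig" and w2: "w2 \<in> lists Sig" using w dec by auto
  have tc: "\<tau> \<in> carrier_mat M M" using run_carrier s \<tau>_def by simp
  have e1: "(nrm M (Ph c \<tau> - \<tau>))\<^sup>2 = (nrm M \<tau>)\<^sup>2 - (nrm M (Ph c \<tau>))\<^sup>2"
    using Ph_pyth[OF c tc] by simp
  have "nrm M \<tau> \<le> nrm M \<sigma>" using run_contr[OF w1 s] \<tau>_def by simp
  then have e2: "(nrm M \<tau>)\<^sup>2 \<le> (nrm M \<sigma>)\<^sup>2" by (simp add: power_mono)
  have "run \<sigma> w = run (Ph c \<tau>) w2" using dec \<tau>_def by (simp add: run_append)
  then have "nrm M (run \<sigma> w) \<le> nrm M (Ph c \<tau>)" using run_contr[OF w2 Ph_carrier] by simp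
  then have e3: "(nrm M (run \<sigma> w))\<^sup>2 \<le> (nrm M (Ph c \<tau>))\<^sup>2" by (simp add: power_mono)
  have "(nrm M (Ph c \<tau> - \<tau>))\<^sup>2 \<le> (nrm M \<sigma>)\<^sup>2 - (nrm M (run \<sigma> w))\<^sup>2" using e1 e2 e3 by linarith
  then show ?thesis unfolding \<tau>_def[symmetric] by (simp add: real_le_rsqrt)
qed

lemma drift:
  assumes w: "w \<in> lists Sig" and s: "\<sigma> \<in> carrier_mat M M" and dec: "w = w1 @ rest"
  shows "nrm M (run \<sigma> w1 - \<sigma>) \<le> length w1 * sqrt ((nrm M \<sigma>)\<^sup>2 - (nrm M (run \<sigma> w))\<^sup>2)"
  using dec
proof (induction w1 arbitrary: rest rule: rev_induct)
  case Nil
  then show ?case using nrm_self[OF s] by simp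
next
  case (snoc c xs)
  define D where "D = sqrt ((nrm M \<sigma>)\<^sup>2 - (nrm M (run \<sigma> w))\<^sup>2)"
  define \<tau> where "\<tau> = run \<sigma> xs"
  have dec2: "w = xs @ c # rest" using snoc by simp
  have tc: "\<tau> \<in> carrier_mat M M" using run_carrier s \<tau>_def by simp
  have ih: "nrm M (\<tau> - \<sigma>) \<le> length xs * D" using snoc.IH[OF dec2] \<tau>_def D_def by simp
  have st: "nrm M (Ph c \<tau> - \<tau>) \<le> D" using step_small[OF w s dec2] \<tau>_def D_def by simp
  have "nrm M (run \<sigma> (xs @ [c]) - \<sigma>) = nrm M (Ph c \<tau> - \<sigma>)" by (simp add: run_snoc \<tau>_def)
  also have "\<dots> \<le> nrm M (Ph c \<tau> - \<tau>) + nrm M (\<tau> - \<sigma>)" by (rule nrm_triangle[OF Ph_carrier tc s])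
  also have "\<dots> \<le> length (xs @ [c]) * D" using ih st by (simp add: algebra_simps)
  finally show ?case unfolding D_def .
qed

lemma near:
  assumes w: "w \<in> lists Sig" and s: "\<sigma> \<in> carrier_mat M M" and dec: "w = w1 @ c # w2"
  shows "nrm M (Ph c \<sigma> - \<sigma>) \<le> (2 * length w1 + 1) * sqrt ((nrm M \<sigma>)\<^sup>2 - (nrm M (run \<sigma> w))\<^sup>2)"
proof -
  define D where "D = sqrt ((nrm M \<sigma>)\<^sup>2 - (nrm M (run \<sigma> w))\<^sup>2)"
  define \<tau> where "\<tau> = run \<sigma> w1"
  have c: "c \<in> Sig" using w dec by auto
  have tc: "\<tau> \<in> carrier_mat M M" using run_carrier s \<tau>_def by simp
  have d1: "nrm M (\<tau> - \<sigma>) \<le> length w1 * D" using drift[OF w s dec] \<tau>_def D_def by simp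
  have d2: "nrm M (Ph c \<tau> - \<tau>) \<le> D" using step_small[OF w s dec] \<tau>_def D_def by simp
  have "nrm M (Ph c \<sigma> - \<sigma>) \<le> nrm M (Ph c \<sigma> - Ph c \<tau>) + nrm M (Ph c \<tau> - \<sigma>)"
    by (rule nrm_triangle[OF Ph_carrier Ph_carrier s])
  also have "\<dots> \<le> nrm M (\<sigma> - \<tau>) + (nrm M (Ph c \<tau> - \<tau>) + nrm M (\<tau> - \<sigma>))"
    using Ph_nonexp[OF c s tc] nrm_triangle[OF Ph_carrier tc s, of c \<tau>] by linarith
  also have "\<dots> \<le> (2 * length w1 + 1) * D"
    using d1 d2 nrm_minus_commute[OF s tc] by (simp add: algebra_simps)
  finally show ?thesis unfolding D_def .
qed

lemma absorb:
  fixes e :: real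
  assumes v: "v \<in> lists Sig" and t: "\<tau> \<in> carrier_mat M M"
    and fx: "\<And>c. c \<in> set v \<Longrightarrow> nrm M (Ph c \<tau> - \<tau>) \<le> e"
  shows "nrm M (run \<tau> v - \<tau>) \<le> length v * e"
  using v fx
proof (induction v)
  case Nil
  then show ?case using nrm_self[OF t] by simp
next
  case (Cons c v)
  have c: "c \<in> Sig" and vl: "v \<in> lists Sig" using Cons by auto
  have "nrm M (run \<tau> (c # v) - \<tau>) = nrm M (run (Ph c \<tau>) v - \<tau>)" by simp
  also have "\<dots> \<le> nrm M (run (Ph c \<tau>) v - run \<tau> v) + nrm M (run \<tau> v - \<tau>)"
    by (rule nrm_triangle[OF run_carrier[OF Ph_carrier] run_carrier[OF t] t])
  also have "\<dots> \<le> nrm M (Ph c \<tau> - \<tau>) + length v * e"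
  proof -
    have ih: "nrm M (run \<tau> v - \<tau>) \<le> length v * e" using Cons.IH Cons.prems by auto
    have "nrm M (run (Ph c \<tau>) v - run \<tau> v) \<le> nrm M (Ph c \<tau> - \<tau>)"
      using run_nonexp[OF vl Ph_carrier t, of c] .
    then show ?thesis using ih by linarith
  qed
  also have "\<dots> \<le> length (c # v) * e" using Cons by (simp add: algebra_simps)
  finally show ?case .
qed

end


lemma small_drop:
  fixes f :: "nat \<Rightarrow> real" and R :: real
  assumes K: "K \<ge> 1" and f1: "f 1 \<le> R" and fpos: "\<And>k. f k \<ge> 0"
  shows "\<exists>k\<in>{1..K}. f k - f (Suc k) \<le> R / K"
proof (rule ccontr)
  assume "\<not> ?thesis"
  then have lt: "\<And>k. k \<in> {1..K} \<Longrightarrow> R / K < f k - f (Suc k)" by force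
  have "(\<Sum>k=1..K. R / K) < (\<Sum>k=1..K. f k - f (Suc k))"
    by (rule sum_strict_mono) (use K lt in auto)
  also have "(\<Sum>k=1..K. f k - f (Suc k)) = f 1 - f (Suc K)"
    using sum_Suc_diff[of 1 K "\<lambda>k. - f k"] by simp
  also have "(\<Sum>k=1..K. R / K) = R" using K by simp
  finally show False using f1 fpos[of "Suc K"] by linarith
qed

context qfa
begin

lemma good:
  assumes s: "s \<in> lists Sig" and sg: "\<sigma> \<in> carrier_mat M M" and n: "n \<ge> 1" and e: "e > 0"
  shows "\<exists>a\<ge>1. \<forall>c\<in>set s. nrm M (Ph c (run \<sigma> (pw s (a*n))) - run \<sigma> (pw s (a*n))) \<le> e"
proof (cases "s = []")
  case True
  then show ?thesis by auto
next
  case False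
  define S where "S = pw s n"
  have Sdec: "S = s @ pw s (n - 1)" using n pw_Suc'[of s "n - 1"] S_def by simp
  have Sl: "S \<in> lists Sig" using pw_lists[OF s] S_def by simp
  define f where "f k = (nrm M (run \<sigma> (pw S k)))\<^sup>2" for k
  define R where "R = (nrm M \<sigma>)\<^sup>2"
  define ls where "ls = length s"
  define K :: nat where "K = nat \<lceil>R * (2 * ls + 1)\<^sup>2 / e\<^sup>2\<rceil> + 1"
  have K1: "K \<ge> 1" by (simp add: K_def)
  have f1: "f 1 \<le> R"
  proof -
    have "nrm M (run \<sigma> (pw S 1)) \<le> nrm M \<sigma>" using run_contr[OF pw_lists[OF Sl] sg] .
    then show ?thesis unfolding f_def R_def by (simp add: power_mono)
  qed
  obtain k where k: "k \<in> {1..K}" "f k - f (Suc k) \<le> R / K"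
    using small_drop[of K f R, OF K1 f1] f_def by force
  define \<tau> where "\<tau> = run \<sigma> (pw S k)"
  have tc: "\<tau> \<in> carrier_mat M M" using run_carrier[OF sg] \<tau>_def by simp
  have eqa: "pw s (k * n) = pw S k" using pw_mult S_def by simp
  have fk1: "f (Suc k) = (nrm M (run \<tau> S))\<^sup>2" unfolding f_def \<tau>_def by (simp add: pw_Suc run_append)
  have fk: "f k = (nrm M \<tau>)\<^sup>2" unfolding f_def \<tau>_def by simp
  have Rpos: "R \<ge> 0" by (simp add: R_def)
  have bound: "(2 * ls + 1) * sqrt (R / K) \<le> e"
  proof -
    have "R * (2 * ls + 1)\<^sup>2 / e\<^sup>2 \<le> K" unfolding K_def by linarith
    then have "R * (2 * ls + 1)\<^sup>2 \<le> K * e\<^sup>2" using e by (simp add: divide_le_eq)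
    then have "R / K * (2 * ls + 1)\<^sup>2 \<le> e\<^sup>2" using K1 by (simp add: divide_le_eq mult.commute mult.left_commute)
    then have "(sqrt (R / K) * (2 * ls + 1))\<^sup>2 \<le> e\<^sup>2"
      using Rpos by (simp add: power_mult_distrib)
    then have "sqrt (R / K) * (2 * ls + 1) \<le> e"
      using e by (simp add: power2_le_iff_abs_le)
    then show ?thesis by (simp add: mult.commute)
  qed
  show ?thesis
  proof (intro exI[of _ k] conjI ballI)
    show "1 \<le> k" using k by simp
    fix c assume c: "c \<in> set s"
    obtain w1 w2 where sd: "s = w1 @ c # w2" using split_list[OF c] by blast
    have Sd: "S = w1 @ c # (w2 @ pw s (n - 1))" using Sdec sd by simp
    have lw: "length w1 \<le> ls" using sd ls_def by simp
    have "nrm M (Ph c \<tau> - \<tau>) \<le> (2 * length w1 + 1) * sqrt ((nrm M \<tau>)\<^sup>2 - (nrm M (run \<tau> S))\<^sup>2)"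
      by (rule near[OF Sl tc Sd])
    also have "\<dots> \<le> (2 * ls + 1) * sqrt (R / K)"
    proof (rule mult_mono)
      show "real (2 * length w1 + 1) \<le> real (2 * ls + 1)" using lw by simp
      show "sqrt ((nrm M \<tau>)\<^sup>2 - (nrm M (run \<tau> S))\<^sup>2) \<le> sqrt (R / K)"
        using k(2) fk fk1 by simp
    qed (use run_contr[OF Sl tc] in auto)
    also have "\<dots> \<le> e" using bound by simp
    finally show "nrm M (Ph c (run \<sigma> (pw s (k * n))) - run \<sigma> (pw s (k * n))) \<le> e"
      using eqa \<tau>_def by simp
  qed
qed

end


context qfa
begin

definition Eqv :: "'a list \<Rightarrow> 'a list \<Rightarrow> bool" where
  "Eqv x y \<longleftrightarrow> (\<forall>\<alpha>\<in>lists Sig. \<forall>\<beta>\<in>lists Sig. (\<alpha> @ x @ \<beta> \<in> L) = (\<alpha> @ y @ \<beta> \<in> L))"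

lemma Eqv_refl: "Eqv x x" by (simp add: Eqv_def)
lemma Eqv_sym: "Eqv x y \<Longrightarrow> Eqv y x" by (simp add: Eqv_def)
lemma Eqv_trans: "Eqv x y \<Longrightarrow> Eqv y z \<Longrightarrow> Eqv x z" by (simp add: Eqv_def)
lemma Eqv_cong: "Eqv x y \<Longrightarrow> u \<in> lists Sig \<Longrightarrow> v \<in> lists Sig \<Longrightarrow> Eqv (u @ x @ v) (u @ y @ v)"
  unfolding Eqv_def
proof (intro ballI)
  fix \<alpha> \<beta> assume H: "\<forall>\<alpha>\<in>lists Sig. \<forall>\<beta>\<in>lists Sig. (\<alpha> @ x @ \<beta> \<in> L) = (\<alpha> @ y @ \<beta> \<in> L)"
    and u: "u \<in> lists Sig" and v: "v \<in> lists Sig" and a: "\<alpha> \<in> lists Sig" and b: "\<beta> \<in> lists Sig"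
  have "\<alpha> @ u \<in> lists Sig" "v @ \<beta> \<in> lists Sig" using u v a b by auto
  then have "(\<alpha> @ u) @ x @ (v @ \<beta>) \<in> L \<longleftrightarrow> (\<alpha> @ u) @ y @ (v @ \<beta>) \<in> L"
    using H by blast
  then show "(\<alpha> @ (u @ x @ v) @ \<beta> \<in> L) = (\<alpha> @ (u @ y @ v) @ \<beta> \<in> L)" by simp
qed

lemma same_side:
  assumes x: "x \<in> lists Sig" and y: "y \<in> lists Sig" and d: "\<bar>acc_prob A x - acc_prob A y\<bar> < dl"
  shows "x \<in> L \<longleftrightarrow> y \<in> L"
proof -
  have ix: "dl \<le> \<bar>acc_prob A x - cp\<bar>" and iy: "dl \<le> \<bar>acc_prob A y - cp\<bar>" using iso x y by auto
  show ?thesis using recog[OF x] recog[OF y] ix iy d dpos by (auto simp: abs_if split: if_splits)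
qed

lemma re_hs_diff_right:
  assumes "X \<in> carrier_mat M M" "Y \<in> carrier_mat M M"
  shows "\<bar>Re (hs M W X) - Re (hs M W Y)\<bar> \<le> nrm M W * nrm M (X - Y)"
  using cs_re[of M W "X - Y"] hs_minus_right[OF assms, of W] by simp

lemma re_hs_diff_left:
  assumes "X \<in> carrier_mat M M" "Y \<in> carrier_mat M M"
  shows "\<bar>Re (hs M X W) - Re (hs M Y W)\<bar> \<le> nrm M (X - Y) * nrm M W"
  using cs_re[of M "X - Y" W] hs_minus_left[OF assms, of W] by simp

lemma Qm_nonneg: "nrm M Qm \<ge> 0" by simp

lemma right_abs:
  fixes e :: real
  assumes W: "W \<in> lists Sig" and v: "v \<in> lists Sig" and b: "\<beta> \<in> lists Sig" and e: "e \<ge> 0"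
    and fx: "\<And>c. c \<in> set v \<Longrightarrow> nrm M (Ph c (run (rho0 A) W) - run (rho0 A) W) \<le> e"
    and small: "length v * e * nrm M Qm < dl"
  shows "W @ v @ \<beta> \<in> L \<longleftrightarrow> W @ \<beta> \<in> L"
proof (rule same_side)
  show "W @ v @ \<beta> \<in> lists Sig" "W @ \<beta> \<in> lists Sig" using W v b by auto
  define \<tau> where "\<tau> = run (rho0 A) W"
  have tc: "\<tau> \<in> carrier_mat M M" using run_carrier[OF rho0_carrier] \<tau>_def by simp
  define O' where "O' = run Qm (rev \<beta>)"
  have oc: "O' \<in> carrier_mat M M" using run_carrier[OF Qm_carrier] O'_def by simp
  have bl: "rev \<beta> \<in> lists Sig" using b by (auto simp: in_lists_conv_set)
  have p1: "acc_prob A (W @ v @ \<beta>) = Re (hs M O' (run \<tau> v))"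
    using acc_run[of "W @ v @ \<beta>"] run_pair[OF b Qm_carrier run_carrier[OF tc]] O'_def \<tau>_def
    by (simp add: run_append)
  have p2: "acc_prob A (W @ \<beta>) = Re (hs M O' \<tau>)"
    using acc_run[of "W @ \<beta>"] run_pair[OF b Qm_carrier tc] O'_def \<tau>_def
    by (simp add: run_append)
  have "\<bar>acc_prob A (W @ v @ \<beta>) - acc_prob A (W @ \<beta>)\<bar> \<le> nrm M O' * nrm M (run \<tau> v - \<tau>)"
    unfolding p1 p2 by (rule re_hs_diff_right[OF run_carrier[OF tc] tc])
  also have "\<dots> \<le> nrm M Qm * (length v * e)"
  proof (rule mult_mono)
    show "nrm M O' \<le> nrm M Qm" using run_contr[OF bl Qm_carrier] O'_def by simp
    show "nrm M (run \<tau> v - \<tau>) \<le> length v * e" using absorb[OF v tc] fx \<tau>_def by simp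
  qed (use e in auto)
  also have "\<dots> < dl" using small by (simp add: mult_ac)
  finally show "\<bar>acc_prob A (W @ v @ \<beta>) - acc_prob A (W @ \<beta>)\<bar> < dl" .
qed

lemma left_abs:
  fixes e :: real
  assumes a: "\<alpha> \<in> lists Sig" and u: "u \<in> lists Sig" and Z: "Z \<in> lists Sig" and e: "e \<ge> 0"
    and fx: "\<And>c. c \<in> set u \<Longrightarrow> nrm M (Ph c (run Qm (rev Z)) - run Qm (rev Z)) \<le> e"
    and small: "length u * e * nrm M (rho0 A) < dl"
  shows "\<alpha> @ u @ Z \<in> L \<longleftrightarrow> \<alpha> @ Z \<in> L"
proof (rule same_side)
  show "\<alpha> @ u @ Z \<in> lists Sig" "\<alpha> @ Z \<in> lists Sig" using a u Z by auto
  define W' where "W' = run Qm (rev Z)"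
  have wc: "W' \<in> carrier_mat M M" using run_carrier[OF Qm_carrier] W'_def by simp
  define \<rho> where "\<rho> = run (rho0 A) \<alpha>"
  have rc: "\<rho> \<in> carrier_mat M M" using run_carrier[OF rho0_carrier] \<rho>_def by simp
  have uZ: "u @ Z \<in> lists Sig" using u Z by simp
  have ru: "rev u \<in> lists Sig" using u by (auto simp: in_lists_conv_set)
  have p1: "acc_prob A (\<alpha> @ u @ Z) = Re (hs M (run W' (rev u)) \<rho>)"
    using acc_run[of "\<alpha> @ u @ Z"] run_pair[OF uZ Qm_carrier rc] W'_def \<rho>_def
    by (simp add: run_append)
  have p2: "acc_prob A (\<alpha> @ Z) = Re (hs M W' \<rho>)"
    using acc_run[of "\<alpha> @ Z"] run_pair[OF Z Qm_carrier rc] W'_def \<rho>_def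
    by (simp add: run_append)
  have "\<bar>acc_prob A (\<alpha> @ u @ Z) - acc_prob A (\<alpha> @ Z)\<bar> \<le> nrm M (run W' (rev u) - W') * nrm M \<rho>"
    unfolding p1 p2 by (rule re_hs_diff_left[OF run_carrier[OF wc] wc])
  also have "\<dots> \<le> (length u * e) * nrm M (rho0 A)"
  proof (rule mult_mono)
    show "nrm M \<rho> \<le> nrm M (rho0 A)" using run_contr[OF a rho0_carrier] \<rho>_def by simp
    show "nrm M (run W' (rev u) - W') \<le> length u * e" using absorb[OF ru wc] fx W'_def by simp
  qed (use e in auto)
  also have "\<dots> < dl" using small by simp
  finally show "\<bar>acc_prob A (\<alpha> @ u @ Z) - acc_prob A (\<alpha> @ Z)\<bar> < dl" .
qed

end


lemma small_arith:
  fixes d a b :: real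
  assumes "d > 0" "a \<ge> 0" "b \<ge> 0"
  shows "a * (d / ((a + 1) * (b + 1))) * b < d"
proof -
  have pos: "(a + 1) * (b + 1) > 0" using assms by simp
  have "a * b < (a + 1) * (b + 1)" using assms by (simp add: algebra_simps)
  then have "a * b * d < (a + 1) * (b + 1) * d" using assms by simp
  then have "a * b * d / ((a + 1) * (b + 1)) < d" using pos by (simp add: divide_less_eq mult.commute)
  then show ?thesis by (simp add: mult_ac)
qed

context qfa
begin

lemma letter_idem: "c \<in> Sig \<Longrightarrow> Eqv [c, c] [c]"
  unfolding Eqv_def
proof (intro ballI)
  fix \<alpha> \<beta> assume c: "c \<in> Sig" and a: "\<alpha> \<in> lists Sig" and b: "\<beta> \<in> lists Sig"
  have "run (rho0 A) (\<alpha> @ [c, c] @ \<beta>) = run (rho0 A) (\<alpha> @ [c] @ \<beta>)"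
    using Ph_idem[OF c run_carrier[OF rho0_carrier]] by (simp add: run_append)
  then have "acc_prob A (\<alpha> @ [c, c] @ \<beta>) = acc_prob A (\<alpha> @ [c] @ \<beta>)" by (simp add: acc_run)
  then show "(\<alpha> @ [c, c] @ \<beta> \<in> L) = (\<alpha> @ [c] @ \<beta> \<in> L)"
    using recog a b c by auto
qed

lemma pows_common:
  assumes pows: "\<And>w. w \<in> lists Sig \<Longrightarrow> \<exists>n\<ge>1. \<forall>a\<ge>1. Eqv (pw w (a*n)) (pw w n)"
    and s: "s \<in> lists Sig" and t: "t \<in> lists Sig"
  shows "\<exists>n\<ge>1. \<forall>a\<ge>1. Eqv (pw s (a*n)) (pw s n) \<and> Eqv (pw t (a*n)) (pw t n)"
proof -
  obtain ns where ns: "ns \<ge> 1" "\<forall>a\<ge>1. Eqv (pw s (a*ns)) (pw s ns)" using pows[OF s] by blast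
  obtain nt where nt: "nt \<ge> 1" "\<forall>a\<ge>1. Eqv (pw t (a*nt)) (pw t nt)" using pows[OF t] by blast
  show ?thesis
  proof (intro exI[of _ "ns * nt"] conjI allI impI)
    show "1 \<le> ns * nt" using ns nt by simp
    fix a :: nat assume a: "a \<ge> 1"
    have "Eqv (pw s ((a * nt) * ns)) (pw s ns)" using ns a nt by simp
    moreover have "Eqv (pw s (nt * ns)) (pw s ns)" using ns nt by simp
    ultimately show "Eqv (pw s (a * (ns * nt))) (pw s (ns * nt))"
      by (metis Eqv_sym Eqv_trans mult.assoc mult.commute)
    have "Eqv (pw t ((a * ns) * nt)) (pw t nt)" using nt a ns by simp
    moreover have "Eqv (pw t (ns * nt)) (pw t nt)" using ns nt by simp
    ultimately show "Eqv (pw t (a * (ns * nt))) (pw t (ns * nt))"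
      by (metis Eqv_sym Eqv_trans mult.assoc mult.commute)
  qed
qed

lemma jcore:
  assumes x: "x \<in> lists Sig" and y: "y \<in> lists Sig" and u: "u \<in> lists Sig" and v: "v \<in> lists Sig"
    and u': "u' \<in> lists Sig" and v': "v' \<in> lists Sig"
    and H1: "Eqv x (u @ y @ v)" and H2: "Eqv y (u' @ x @ v')"
    and pows: "\<And>w. w \<in> lists Sig \<Longrightarrow> \<exists>n\<ge>1. \<forall>a\<ge>1. Eqv (pw w (a*n)) (pw w n)"
  shows "Eqv x y"
proof -
  define s where "s = u @ u'"
  define t where "t = v' @ v"
  have sl: "s \<in> lists Sig" and tl: "t \<in> lists Sig" using u u' v v' s_def t_def by auto
  have E1: "Eqv x (s @ x @ t)"
    using Eqv_trans[OF H1 Eqv_cong[OF H2 u v]] s_def t_def by simp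
  have E2: "Eqv x (pw s k @ x @ pw t k)" for k
  proof (induction k)
    case 0 then show ?case by (simp add: Eqv_refl)
  next
    case (Suc k)
    have "Eqv (pw s k @ x @ pw t k) (pw s k @ (s @ x @ t) @ pw t k)"
      by (rule Eqv_cong[OF E1 pw_lists[OF sl] pw_lists[OF tl]])
    then have "Eqv x (pw s k @ s @ x @ t @ pw t k)" using Suc Eqv_trans by simp
    then show ?case by (simp only: pw_Suc[of s] pw_Suc'[of t] append_assoc)
  qed
  obtain n where n: "n \<ge> 1" "\<forall>a\<ge>1. Eqv (pw s (a*n)) (pw s n) \<and> Eqv (pw t (a*n)) (pw t n)"
    using pows_common[OF pows sl tl] by blast
  have E3: "Eqv x (pw s (a*n) @ x @ pw t (b*n))" if a: "a \<ge> 1" and b: "b \<ge> 1" for a b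
  proof -
    have c1: "Eqv (pw s n @ (x @ pw t n)) (pw s (a*n) @ (x @ pw t n))"
      using Eqv_cong[OF Eqv_sym[OF conjunct1[OF n(2)[rule_format, OF a]]], of "[]" "x @ pw t n"]
        x pw_lists[OF tl] by simp
    have c2: "Eqv (pw s (a*n) @ x @ pw t n) (pw s (a*n) @ x @ pw t (b*n))"
      using Eqv_cong[OF Eqv_sym[OF conjunct2[OF n(2)[rule_format, OF b]]], of "pw s (a*n) @ x" "[]"]
        x pw_lists[OF sl] by simp
    show ?thesis using Eqv_trans[OF E2[of n] Eqv_trans[OF c1 c2]] by simp
  qed
  have step1: "\<alpha> @ u' @ x @ v' @ \<beta> \<in> L \<longleftrightarrow> \<alpha> @ u' @ x @ \<beta> \<in> L"
    if a: "\<alpha> \<in> lists Sig" and b: "\<beta> \<in> lists Sig" for \<alpha> \<beta>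
  proof -
    define W0 where "W0 = \<alpha> @ u' @ pw s n @ x"
    have W0l: "W0 \<in> lists Sig" using W0_def a u' x pw_lists[OF sl] by simp
    define e1 where "e1 = dl / ((length v' + 1) * (nrm M Qm + 1))"
    have e1p: "e1 > 0" using dpos unfolding e1_def
      by (intro divide_pos_pos mult_pos_pos) (auto simp: add_nonneg_pos)
    obtain b' where b': "b' \<ge> 1"
      "\<forall>c\<in>set t. nrm M (Ph c (run (run (rho0 A) W0) (pw t (b'*n))) - run (run (rho0 A) W0) (pw t (b'*n))) \<le> e1"
      using good[OF tl run_carrier[OF rho0_carrier] n(1) e1p] by blast
    define W where "W = W0 @ pw t (b'*n)"
    have Wl: "W \<in> lists Sig" using W_def W0l pw_lists[OF tl] by simp
    have fx: "\<And>c. c \<in> set v' \<Longrightarrow> nrm M (Ph c (run (rho0 A) W) - run (rho0 A) W) \<le> e1"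
      using b'(2) W_def t_def by (auto simp: run_append)
    have sm: "length v' * e1 * nrm M Qm < dl"
      using small_arith[OF dpos, of "length v'" "nrm M Qm"] unfolding e1_def by (simp add: ac_simps)
    have ra: "W @ v' @ \<beta> \<in> L \<longleftrightarrow> W @ \<beta> \<in> L"
      by (rule right_abs[OF Wl v' b _ fx sm]) (use e1p in simp)
    have l1: "\<alpha> @ u' \<in> lists Sig" "v' @ \<beta> \<in> lists Sig" using a u' v' b by auto
    have E: "Eqv x (pw s n @ x @ pw t (b'*n))" using E3[of 1 b'] b' by simp
    have q1: "(\<alpha> @ u') @ x @ (v' @ \<beta>) \<in> L \<longleftrightarrow> (\<alpha> @ u') @ (pw s n @ x @ pw t (b'*n)) @ (v' @ \<beta>) \<in> L"
      and q2: "(\<alpha> @ u') @ x @ \<beta> \<in> L \<longleftrightarrow> (\<alpha> @ u') @ (pw s n @ x @ pw t (b'*n)) @ \<beta> \<in> L"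
      using E l1 b unfolding Eqv_def by blast+
    show ?thesis using q1 q2 ra W_def W0_def by simp
  qed
  have step2: "\<alpha> @ u' @ x @ \<beta> \<in> L \<longleftrightarrow> \<alpha> @ x @ \<beta> \<in> L"
    if a: "\<alpha> \<in> lists Sig" and b: "\<beta> \<in> lists Sig" for \<alpha> \<beta>
  proof -
    define Z0 where "Z0 = x @ pw t n @ \<beta>"
    have Z0l: "Z0 \<in> lists Sig" using Z0_def b x pw_lists[OF tl] by simp
    define e2 where "e2 = dl / ((length u' + 1) * (nrm M (rho0 A) + 1))"
    have e2p: "e2 > 0" using dpos unfolding e2_def
      by (intro divide_pos_pos mult_pos_pos) (auto simp: add_nonneg_pos)
    have rsl: "rev s \<in> lists Sig" using sl by (auto simp: in_lists_conv_set)
    obtain a' where a': "a' \<ge> 1"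
      "\<forall>c\<in>set (rev s). nrm M (Ph c (run (run Qm (rev Z0)) (pw (rev s) (a'*n))) - run (run Qm (rev Z0)) (pw (rev s) (a'*n))) \<le> e2"
      using good[OF rsl run_carrier[OF Qm_carrier] n(1) e2p] by blast
    define Z where "Z = pw s (a'*n) @ Z0"
    have Zl: "Z \<in> lists Sig" using Z_def Z0l pw_lists[OF sl] by simp
    have rZ: "run Qm (rev Z) = run (run Qm (rev Z0)) (pw (rev s) (a'*n))"
      unfolding Z_def by (simp add: run_append pw_rev)
    have fx: "\<And>c. c \<in> set u' \<Longrightarrow> nrm M (Ph c (run Qm (rev Z)) - run Qm (rev Z)) \<le> e2"
      using a'(2) s_def rZ by auto
    have sm: "length u' * e2 * nrm M (rho0 A) < dl"
      using small_arith[OF dpos, of "length u'" "nrm M (rho0 A)"] unfolding e2_def by (simp add: ac_simps)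
    have la: "\<alpha> @ u' @ Z \<in> L \<longleftrightarrow> \<alpha> @ Z \<in> L"
      by (rule left_abs[OF a u' Zl _ fx sm]) (use e2p in simp)
    have l1: "\<alpha> @ u' \<in> lists Sig" using a u' by auto
    have E: "Eqv x (pw s (a'*n) @ x @ pw t n)" using E3[of a' 1] a' by simp
    have q1: "(\<alpha> @ u') @ x @ \<beta> \<in> L \<longleftrightarrow> (\<alpha> @ u') @ (pw s (a'*n) @ x @ pw t n) @ \<beta> \<in> L"
      and q2: "\<alpha> @ x @ \<beta> \<in> L \<longleftrightarrow> \<alpha> @ (pw s (a'*n) @ x @ pw t n) @ \<beta> \<in> L"
      using E l1 a b unfolding Eqv_def by blast+
    show ?thesis using q1 q2 la Z_def Z0_def by simp
  qed
  show ?thesis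
    unfolding Eqv_def
  proof (intro ballI)
    fix \<alpha> \<beta> assume a: "\<alpha> \<in> lists Sig" and b: "\<beta> \<in> lists Sig"
    have "\<alpha> @ y @ \<beta> \<in> L \<longleftrightarrow> \<alpha> @ (u' @ x @ v') @ \<beta> \<in> L" using H2 a b unfolding Eqv_def by blast
    then show "(\<alpha> @ x @ \<beta> \<in> L) = (\<alpha> @ y @ \<beta> \<in> L)" using step1[OF a b] step2[OF a b] by simp
  qed
qed

end


context qfa
begin

definition Rcl :: "'a list \<Rightarrow> 'a list set" where
  "Rcl x = {y \<in> lists Sig. \<forall>z\<in>lists Sig. (x @ z \<in> L) = (y @ z \<in> L)}"

lemma Rcl_eq_iff:
  assumes "x \<in> lists Sig" "y \<in> lists Sig"
  shows "Rcl x = Rcl y \<longleftrightarrow> (\<forall>z\<in>lists Sig. (x @ z \<in> L) = (y @ z \<in> L))"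
proof
  assume eq: "Rcl x = Rcl y"
  have "y \<in> Rcl y" using assms by (simp add: Rcl_def)
  then have "y \<in> Rcl x" using eq by simp
  then show "\<forall>z\<in>lists Sig. (x @ z \<in> L) = (y @ z \<in> L)" by (simp add: Rcl_def)
next
  assume "\<forall>z\<in>lists Sig. (x @ z \<in> L) = (y @ z \<in> L)"
  then show "Rcl x = Rcl y" unfolding Rcl_def by auto
qed

lemma rclose:
  assumes x: "x \<in> lists Sig" and y: "y \<in> lists Sig"
    and d: "nrm M (run (rho0 A) x - run (rho0 A) y) * nrm M Qm < dl"
  shows "Rcl x = Rcl y"
  unfolding Rcl_eq_iff[OF x y]
proof
  fix z assume z: "z \<in> lists Sig"
  define O' where "O' = run Qm (rev z)"
  have zl: "rev z \<in> lists Sig" using z by (auto simp: in_lists_conv_set)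
  have xc: "run (rho0 A) x \<in> carrier_mat M M" and yc: "run (rho0 A) y \<in> carrier_mat M M"
    using run_carrier[OF rho0_carrier] by auto
  have p1: "acc_prob A (x @ z) = Re (hs M O' (run (rho0 A) x))"
    using acc_run[of "x @ z"] run_pair[OF z Qm_carrier xc] O'_def by (simp add: run_append)
  have p2: "acc_prob A (y @ z) = Re (hs M O' (run (rho0 A) y))"
    using acc_run[of "y @ z"] run_pair[OF z Qm_carrier yc] O'_def by (simp add: run_append)
  have "\<bar>acc_prob A (x @ z) - acc_prob A (y @ z)\<bar> \<le> nrm M O' * nrm M (run (rho0 A) x - run (rho0 A) y)"
    unfolding p1 p2 by (rule re_hs_diff_right[OF xc yc])
  also have "\<dots> \<le> nrm M Qm * nrm M (run (rho0 A) x - run (rho0 A) y)"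
    using run_contr[OF zl Qm_carrier] O'_def by (simp add: mult_right_mono)
  also have "\<dots> < dl" using d by (simp add: mult.commute)
  finally have "\<bar>acc_prob A (x @ z) - acc_prob A (y @ z)\<bar> < dl" .
  then show "(x @ z \<in> L) = (y @ z \<in> L)" using same_side[of "x @ z" "y @ z"] x y z by auto
qed

definition Kd :: real where "Kd = 2 * (M + 1) * (nrm M Qm + 1) / dl"

lemma Kd_pos: "Kd > 0"
  unfolding Kd_def using dpos by (intro divide_pos_pos mult_pos_pos) (auto simp: add_nonneg_pos)

definition gq :: "complex mat \<Rightarrow> (int \<times> int) list" where
  "gq B = map (\<lambda>(i,j). (round (Kd * Re (B $$ (i,j))), round (Kd * Im (B $$ (i,j)))))
            (List.product [0..<M] [0..<M])"

lemma round_close: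
  fixes a b :: real
  assumes "round (Kd * a) = round (Kd * b)"
  shows "\<bar>a - b\<bar> \<le> 1 / Kd"
proof -
  have "\<bar>of_int (round (Kd * a)) - Kd * a\<bar> \<le> 1/2" "\<bar>of_int (round (Kd * b)) - Kd * b\<bar> \<le> 1/2"
    by (rule of_int_round_abs_le)+
  then have "\<bar>Kd * a - Kd * b\<bar> \<le> 1" using assms by linarith
  then have "Kd * \<bar>a - b\<bar> \<le> 1" using Kd_pos by (simp add: abs_mult right_diff_distrib[symmetric])
  then show ?thesis using Kd_pos by (simp add: le_divide_eq mult.commute)
qed

lemma gq_close:
  assumes B: "B \<in> carrier_mat M M" and C: "C \<in> carrier_mat M M" and g: "gq B = gq C"
  shows "nrm M (B - C) * nrm M Qm < dl"
proof -
  have ent: "cmod ((B - C) $$ p) \<le> 2 / Kd" if p: "p \<in> IX M" for p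
  proof -
    obtain i j where ij: "p = (i,j)" "i < M" "j < M" using p by (auto simp: IX_def)
    have "(i,j) \<in> set (List.product [0..<M] [0..<M])" using ij by simp
    then have r1: "round (Kd * Re (B $$ (i,j))) = round (Kd * Re (C $$ (i,j)))"
      and r2: "round (Kd * Im (B $$ (i,j))) = round (Kd * Im (C $$ (i,j)))"
      using g unfolding gq_def map_eq_conv by fastforce+
    have e: "(B - C) $$ p = B $$ (i,j) - C $$ (i,j)" using ij B C by simp
    have "cmod ((B - C) $$ p) \<le> \<bar>Re ((B - C) $$ p)\<bar> + \<bar>Im ((B - C) $$ p)\<bar>" by (rule cmod_le)
    also have "\<dots> \<le> 1 / Kd + 1 / Kd" unfolding e using round_close[OF r1] round_close[OF r2] by simp
    finally show ?thesis by simp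
  qed
  have "nrm M (B - C) \<le> L2_set (\<lambda>p. 2 / Kd) (IX M)"
    unfolding nrm_def by (rule L2_set_mono) (use ent in auto)
  also have "\<dots> = M * (2 / Kd)"
    using Kd_pos by (simp add: L2_set_constant IX_def)
  finally have n1: "nrm M (B - C) \<le> M * (2 / Kd)" .
  have "nrm M (B - C) * nrm M Qm \<le> M * (2 / Kd) * nrm M Qm"
    by (rule mult_right_mono[OF n1 nrm_nonneg])
  also have "M * (2 / Kd) * nrm M Qm = dl * (M * nrm M Qm) / ((M + 1) * (nrm M Qm + 1))"
  proof -
    have a1: "real M + 1 > 0" "nrm M Qm + 1 > 0" by (simp_all add: add_nonneg_pos)
    have "2 / Kd = dl / ((M + 1) * (nrm M Qm + 1))"
    proof -
      have "2 / Kd = 2 * dl / (2 * ((real M + 1) * (nrm M Qm + 1)))"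
        unfolding Kd_def divide_divide_eq_right by (simp only: mult.assoc of_nat_mult of_nat_add of_nat_1 of_nat_numeral)
      also have "\<dots> = dl / ((real M + 1) * (nrm M Qm + 1))"
        by (rule mult_divide_mult_cancel_left) simp
      finally show ?thesis by simp
    qed
    then show ?thesis by simp
  qed
  also have "\<dots> < dl"
  proof -
    have pos: "(M + 1) * (nrm M Qm + 1) > 0" by (simp add: add_nonneg_pos)
    have h0: "0 < 1 + (real M + nrm M Qm)" by (simp add: add_pos_nonneg)
    have "M * nrm M Qm < (M + 1) * (nrm M Qm + 1)" using h0 by (simp add: algebra_simps)
    then have "dl * (M * nrm M Qm) < dl * ((M + 1) * (nrm M Qm + 1))" using dpos by simp
    then show ?thesis using pos by (simp add: divide_less_eq)
  qed
  finally show ?thesis .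
qed

lemma gq_range:
  assumes B: "B \<in> carrier_mat M M" and nb: "nrm M B \<le> Rb"
  shows "gq B \<in> {xs. set xs \<subseteq> {-(\<lceil>Kd * Rb\<rceil> + 1)..\<lceil>Kd * Rb\<rceil> + 1} \<times> {-(\<lceil>Kd * Rb\<rceil> + 1)..\<lceil>Kd * Rb\<rceil> + 1}
      \<and> length xs = M * M}"
proof -
  define Mz where "Mz = \<lceil>Kd * Rb\<rceil> + 1"
  have bnd: "- Mz \<le> round (Kd * y) \<and> round (Kd * y) \<le> Mz" if y: "\<bar>y\<bar> \<le> Rb" for y
  proof -
    have "\<bar>Kd * y\<bar> \<le> Kd * Rb" using y Kd_pos by (simp add: abs_mult)
    moreover have "\<bar>of_int (round (Kd * y)) - Kd * y\<bar> \<le> 1/2" by (rule of_int_round_abs_le)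
    moreover have "Kd * Rb \<le> of_int \<lceil>Kd * Rb\<rceil>" by (rule le_of_int_ceiling)
    moreover have "real_of_int Mz = real_of_int \<lceil>Kd * Rb\<rceil> + 1" by (simp add: Mz_def)
    ultimately have "\<bar>real_of_int (round (Kd * y))\<bar> \<le> real_of_int Mz" by linarith
    then have "\<bar>round (Kd * y)\<bar> \<le> Mz" by linarith
    then show ?thesis by linarith
  qed
  have ent: "\<bar>Re (B $$ (i,j))\<bar> \<le> Rb \<and> \<bar>Im (B $$ (i,j))\<bar> \<le> Rb" if "i < M" "j < M" for i j
  proof -
    have "cmod (B $$ (i,j)) \<le> nrm M B"
      unfolding nrm_def by (rule member_le_L2_set) (use that in \<open>auto simp: IX_def\<close>)
    then show ?thesis using abs_Re_le_cmod abs_Im_le_cmod nb by (meson order_trans)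
  qed
  show ?thesis unfolding gq_def Mz_def[symmetric] using bnd ent by (auto simp: length_product)
qed

lemma finite_Rcl: "finite (Rcl ` lists Sig)"
proof -
  define Rb where "Rb = nrm M (rho0 A)"
  define Mz where "Mz = \<lceil>Kd * Rb\<rceil> + 1"
  define GS where "GS = {xs. set xs \<subseteq> {-Mz..Mz} \<times> {-Mz..Mz} \<and> length xs = M * M}"
  have fGS: "finite GS" unfolding GS_def by (rule finite_lists_length_eq) simp
  define G where "G = (\<lambda>x. gq (run (rho0 A) x)) ` lists Sig"
  have "G \<subseteq> GS" unfolding G_def GS_def Mz_def
    using gq_range[OF run_carrier[OF rho0_carrier]] run_contr[OF _ rho0_carrier] Rb_def by blast
  then have fG: "finite G" using fGS finite_subset by blast
  define pick where "pick v = (SOME x. x \<in> lists Sig \<and> gq (run (rho0 A) x) = v)" for v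
  have "Rcl ` lists Sig \<subseteq> (\<lambda>v. Rcl (pick v)) ` G"
  proof
    fix C assume "C \<in> Rcl ` lists Sig"
    then obtain x where x: "x \<in> lists Sig" "C = Rcl x" by blast
    define v where "v = gq (run (rho0 A) x)"
    have "\<exists>x'. x' \<in> lists Sig \<and> gq (run (rho0 A) x') = v" using x v_def by blast
    then have p: "pick v \<in> lists Sig" "gq (run (rho0 A) (pick v)) = v"
      unfolding pick_def by (metis (mono_tags, lifting) someI_ex)+
    have "Rcl (pick v) = Rcl x"
      by (rule rclose[OF p(1) x(1) gq_close]) (use p v_def run_carrier[OF rho0_carrier] in auto)
    then show "C \<in> (\<lambda>v. Rcl (pick v)) ` G" using x v_def G_def by blast
  qed
  then show ?thesis using fG finite_subset by blast
qed

end


context qfa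
begin

lemma Rcl_snoc:
  assumes x: "x \<in> lists Sig" and y: "y \<in> lists Sig" and a: "a \<in> Sig" and eq: "Rcl x = Rcl y"
  shows "Rcl (x @ [a]) = Rcl (y @ [a])"
proof -
  have H: "\<forall>z\<in>lists Sig. (x @ z \<in> L) = (y @ z \<in> L)" using Rcl_eq_iff[OF x y] eq by simp
  have "\<forall>z\<in>lists Sig. ((x @ [a]) @ z \<in> L) = ((y @ [a]) @ z \<in> L)"
  proof
    fix z assume "z \<in> lists Sig"
    then have "a # z \<in> lists Sig" using a by simp
    then show "((x @ [a]) @ z \<in> L) = ((y @ [a]) @ z \<in> L)" using H by simp
  qed
  then show ?thesis using Rcl_eq_iff[of "x @ [a]" "y @ [a]"] x y a by simp
qed

lemma regular: "regular_lang Sig L"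
proof -
  define RS where "RS = Rcl ` lists Sig"
  have fRS: "finite RS" using finite_Rcl RS_def by simp
  obtain h where hb: "bij_betw h RS {0..<card RS}" using ex_bij_betw_finite_nat[OF fRS] by blast
  have hinj: "inj_on h RS" and himg: "h ` RS = {0..<card RS}" using hb by (auto simp: bij_betw_def)
  define rp where "rp q = (SOME x. x \<in> lists Sig \<and> h (Rcl x) = q)" for q
  have rp: "rp q \<in> lists Sig \<and> h (Rcl (rp q)) = q" if qq: "q \<in> {0..<card RS}" for q
  proof -
    have "q \<in> h ` RS" using qq himg by simp
    then obtain C where "C \<in> RS" "h C = q" by blast
    then obtain x where "x \<in> lists Sig" "h (Rcl x) = q" using RS_def by blast
    then show ?thesis unfolding rp_def by (rule someI[where P = "\<lambda>x. x \<in> lists Sig \<and> h (Rcl x) = q", OF conjI])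
  qed
  define dt where "dt q a = h (Rcl (rp q @ [a]))" for q a
  define q0 where "q0 = h (Rcl [])"
  define Fin where "Fin = h ` (Rcl ` L)"
  have hin: "h (Rcl w) \<in> {0..<card RS}" if "w \<in> lists Sig" for w
    using himg that RS_def by blast
  have run: "foldl dt q0 w = h (Rcl w)" if "w \<in> lists Sig" for w
    using that
  proof (induction w rule: rev_induct)
    case Nil then show ?case by (simp add: q0_def)
  next
    case (snoc a w)
    have w: "w \<in> lists Sig" and a: "a \<in> Sig" using snoc by auto
    define x' where "x' = rp (h (Rcl w))"
    have x': "x' \<in> lists Sig" "h (Rcl x') = h (Rcl w)" using rp[OF hin[OF w]] x'_def by auto
    have "Rcl x' = Rcl w"
      using inj_onD[OF hinj x'(2)] x'(1) w RS_def by blast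
    then have "Rcl (x' @ [a]) = Rcl (w @ [a])" by (rule Rcl_snoc[OF x'(1) w a])
    then show ?case using snoc w by (simp add: dt_def x'_def)
  qed
  show ?thesis
    unfolding regular_lang_def
  proof (intro exI conjI)
    show "finite {0..<card RS}" by simp
    show "q0 \<in> {0..<card RS}" unfolding q0_def by (rule hin) simp
    show "\<forall>q\<in>{0..<card RS}. \<forall>a\<in>Sig. dt q a \<in> {0..<card RS}"
    proof (intro ballI)
      fix q a assume q: "q \<in> {0..<card RS}" and a: "a \<in> Sig"
      have "rp q @ [a] \<in> lists Sig" using rp[OF q] a by simp
      then show "dt q a \<in> {0..<card RS}" unfolding dt_def by (rule hin)
    qed
    show "Fin \<subseteq> {0..<card RS}" unfolding Fin_def using LS hin by blast
    show "L = {w \<in> lists Sig. foldl dt q0 w \<in> Fin}"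
    proof (rule equalityI; rule subsetI)
      fix w assume w: "w \<in> L"
      then have wl: "w \<in> lists Sig" using LS by blast
      then show "w \<in> {w \<in> lists Sig. foldl dt q0 w \<in> Fin}" using run[OF wl] w Fin_def by auto
    next
      fix w assume w: "w \<in> {w \<in> lists Sig. foldl dt q0 w \<in> Fin}"
      then have wl: "w \<in> lists Sig" by simp
      have "h (Rcl w) \<in> Fin" using w run[OF wl] by simp
      then obtain x where x: "x \<in> L" "h (Rcl w) = h (Rcl x)" unfolding Fin_def by blast
      have xl: "x \<in> lists Sig" using x LS by blast
      have "Rcl w = Rcl x" using inj_onD[OF hinj x(2)] wl xl RS_def by blast
      then have "(w @ [] \<in> L) = (x @ [] \<in> L)" using Rcl_eq_iff[OF wl xl] by blast
      then show "w \<in> L" using x by simp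
    qed
  qed
qed

definition RS :: "'a list set set" where "RS = Rcl ` lists Sig"
definition rep :: "'a list set \<Rightarrow> 'a list" where "rep C = (SOME y. y \<in> lists Sig \<and> Rcl y = C)"
definition Tf :: "'a list \<Rightarrow> 'a list set \<Rightarrow> 'a list set" where
  "Tf x = restrict (\<lambda>C. Rcl (rep C @ x)) RS"

lemma rep_prop: "C \<in> RS \<Longrightarrow> rep C \<in> lists Sig \<and> Rcl (rep C) = C"
  unfolding RS_def rep_def by (rule someI_ex) blast

lemma Tf_range: "x \<in> lists Sig \<Longrightarrow> Tf x \<in> PiE RS (\<lambda>_. RS)"
  unfolding Tf_def using rep_prop by (auto simp: RS_def)

lemma Tf_Eqv:
  assumes x: "x \<in> lists Sig" and y: "y \<in> lists Sig" and T: "Tf x = Tf y"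
  shows "Eqv x y"
  unfolding Eqv_def
proof (intro ballI)
  fix \<alpha> \<beta> assume a: "\<alpha> \<in> lists Sig" and b: "\<beta> \<in> lists Sig"
  define C where "C = Rcl \<alpha>"
  have C: "C \<in> RS" using a C_def RS_def by blast
  define r where "r = rep C"
  have r: "r \<in> lists Sig" "Rcl r = Rcl \<alpha>" using rep_prop[OF C] r_def C_def by auto
  have "Tf x C = Tf y C" using T by simp
  then have "Rcl (r @ x) = Rcl (r @ y)" using C r_def by (simp add: Tf_def)
  then have e1: "((r @ x) @ \<beta> \<in> L) = ((r @ y) @ \<beta> \<in> L)"
    using Rcl_eq_iff[of "r @ x" "r @ y"] r x y b by auto
  have "\<forall>z\<in>lists Sig. (r @ z \<in> L) = (\<alpha> @ z \<in> L)" using Rcl_eq_iff[OF r(1) a] r(2) by simp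
  then have e2: "(r @ x @ \<beta> \<in> L) = (\<alpha> @ x @ \<beta> \<in> L)" "(r @ y @ \<beta> \<in> L) = (\<alpha> @ y @ \<beta> \<in> L)"
    using x y b by auto
  show "(\<alpha> @ x @ \<beta> \<in> L) = (\<alpha> @ y @ \<beta> \<in> L)" using e1 e2 by simp
qed

lemma pows: "w \<in> lists Sig \<Longrightarrow> \<exists>n\<ge>1. \<forall>a\<ge>1. Eqv (pw w (a*n)) (pw w n)"
proof -
  assume wl: "w \<in> lists Sig"
  define P where "P = PiE RS (\<lambda>_. RS)"
  have fP: "finite P" unfolding P_def using finite_Rcl by (simp add: RS_def finite_PiE)
  define N where "N = card P"
  define f where "f k = Tf (pw w k)" for k
  have sub: "f ` {1..N+1} \<subseteq> P" unfolding f_def P_def using Tf_range pw_lists[OF wl] by blast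
  have "card (f ` {1..N+1}) \<le> N" using card_mono[OF fP sub] N_def by simp
  then have "card (f ` {1..N+1}) < card {1..N+1}" by simp
  then have "\<not> inj_on f {1..N+1}" by (rule pigeonhole)
  then obtain i j where ij: "i \<in> {1..N+1}" "j \<in> {1..N+1}" "i \<noteq> j" "f i = f j"
    unfolding inj_on_def by blast
  obtain i' j' where ij': "1 \<le> i'" "i' < j'" "f i' = f j'"
    using ij by (metis atLeastAtMost_iff linorder_neqE_nat)
  define p where "p = j' - i'"
  have p1: "p \<ge> 1" and jp: "j' = i' + p" using ij' p_def by auto
  have base: "Eqv (pw w i') (pw w (i' + p))"
    using Tf_Eqv[OF pw_lists[OF wl] pw_lists[OF wl]] ij'(3) jp f_def by simp
  have shift: "Eqv (pw w q) (pw w (q + p))" if q: "q \<ge> i'" for q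
  proof -
    have "Eqv (pw w (q - i') @ pw w i' @ []) (pw w (q - i') @ pw w (i' + p) @ [])"
      by (rule Eqv_cong[OF base pw_lists[OF wl]]) simp
    moreover have "pw w (q - i') @ pw w i' = pw w q" using q pw_add[of w "q - i'" i'] by simp
    moreover have "pw w (q - i') @ pw w (i' + p) = pw w (q + p)" using q pw_add[of w "q - i'" "i' + p"] by simp
    ultimately show ?thesis by simp
  qed
  have iter: "Eqv (pw w q) (pw w (q + c * p))" if q: "q \<ge> i'" for q c
  proof (induction c)
    case 0 then show ?case by (simp add: Eqv_refl)
  next
    case (Suc c)
    have "Eqv (pw w (q + c * p)) (pw w (q + c * p + p))" using shift q by simp
    then have "Eqv (pw w q) (pw w (q + c * p + p))" using Suc Eqv_trans by blast
    moreover have "q + Suc c * p = q + c * p + p" by simp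
    ultimately show ?case by metis
  qed
  show ?thesis
  proof (intro exI[of _ "i' * p"] conjI allI impI)
    show "1 \<le> i' * p" using ij' p1 by simp
    fix a :: nat assume a: "a \<ge> 1"
    have n_ge: "i' * p \<ge> i'" using p1 by simp
    have "a * (i' * p) = i' * p + ((a - 1) * i') * p" using a
      by (metis (no_types, lifting) add.commute le_add_diff_inverse2 mult.assoc mult.commute mult_Suc nat_mult_1 Suc_pred' not_one_le_zero)
    then show "Eqv (pw w (a * (i' * p))) (pw w (i' * p))"
      using iter[OF n_ge, of "(a - 1) * i'"] Eqv_sym by simp
  qed
qed

lemma syn_cong_iff: "(x, y) \<in> syn_cong Sig L \<longleftrightarrow> x \<in> lists Sig \<and> y \<in> lists Sig \<and> Eqv x y"
  unfolding syn_cong_def Eqv_def by auto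

lemma phi_eq:
  assumes x: "x \<in> lists Sig" and y: "y \<in> lists Sig"
  shows "syn_phi Sig L x = syn_phi Sig L y \<longleftrightarrow> Eqv x y"
proof
  assume "syn_phi Sig L x = syn_phi Sig L y"
  moreover have "y \<in> syn_phi Sig L y" using y by (simp add: syn_phi_def syn_cong_iff Eqv_refl)
  ultimately have "y \<in> syn_phi Sig L x" by simp
  then show "Eqv x y" by (simp add: syn_phi_def syn_cong_iff)
next
  assume e: "Eqv x y"
  show "syn_phi Sig L x = syn_phi Sig L y"
    unfolding syn_phi_def using e x y Eqv_trans[OF Eqv_sym[OF e]] Eqv_trans[OF e]
    by (auto simp: syn_cong_iff)
qed

lemma in_VJ: "L \<in> V_Jbar Sig"
  unfolding V_Jbar_def
proof (intro CollectI conjI ballI allI impI)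
  show "L \<subseteq> lists Sig" by (rule LS)
  show "regular_lang Sig L" by (rule regular)
  show "J_trivial_syn Sig L"
    unfolding J_trivial_syn_def
  proof (intro ballI impI)
    fix x y assume x: "x \<in> lists Sig" and y: "y \<in> lists Sig" and I: "syn_ideal Sig L x = syn_ideal Sig L y"
    have "syn_phi Sig L x \<in> syn_ideal Sig L x" unfolding syn_ideal_def by (rule CollectI, rule exI[of _ "[]"], rule exI[of _ "[]"]) simp
    then have "syn_phi Sig L x \<in> syn_ideal Sig L y" using I by simp
    then obtain u v where uv: "u \<in> lists Sig" "v \<in> lists Sig" "syn_phi Sig L x = syn_phi Sig L (u @ y @ v)"
      unfolding syn_ideal_def by blast
    have "syn_phi Sig L y \<in> syn_ideal Sig L y" unfolding syn_ideal_def by (rule CollectI, rule exI[of _ "[]"], rule exI[of _ "[]"]) simp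
    then have "syn_phi Sig L y \<in> syn_ideal Sig L x" using I by simp
    then obtain u' v' where uv': "u' \<in> lists Sig" "v' \<in> lists Sig" "syn_phi Sig L y = syn_phi Sig L (u' @ x @ v')"
      unfolding syn_ideal_def by blast
    have H1: "Eqv x (u @ y @ v)" using phi_eq[of x "u @ y @ v"] uv x y by simp
    have H2: "Eqv y (u' @ x @ v')" using phi_eq[of y "u' @ x @ v'"] uv' x y by simp
    have "Eqv x y" by (rule jcore[OF x y uv(1,2) uv'(1,2) H1 H2 pows])
    then show "syn_phi Sig L x = syn_phi Sig L y" using phi_eq[OF x y] by simp
  qed
  fix \<sigma> assume s: "\<sigma> \<in> Sig"
  show "syn_phi Sig L [\<sigma>, \<sigma>] = syn_phi Sig L [\<sigma>]"
    using phi_eq[of "[\<sigma>, \<sigma>]" "[\<sigma>]"] letter_idem[OF s] s by simp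
qed

end

theorem theorem4:
  fixes \<Sigma> :: "'a set"
  assumes "finite \<Sigma>"
  shows "LMO \<Sigma> \<subseteq> V_Jbar \<Sigma>"
proof
  fix L assume "L \<in> LMO \<Sigma>"
  then obtain A cp where LS: "L \<subseteq> lists \<Sigma>" and v: "valid_mon1qfa \<Sigma> A"
    and r: "recognizes_isolated \<Sigma> A cp L"
    unfolding LMO_def by blast
  from r obtain d where d: "d > 0" "\<forall>x\<in>lists \<Sigma>. d \<le> \<bar>acc_prob A x - cp\<bar>"
    and rc: "\<forall>x\<in>lists \<Sigma>. x \<in> L \<longleftrightarrow> acc_prob A x > cp"
    unfolding recognizes_isolated_def by blast
  interpret qfa \<Sigma> A cp L d
    by unfold_locales (use LS v d rc in auto)
  show "L \<in> V_Jbar \<Sigma>" by (rule in_VJ)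
qed


end
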